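(* Let $L>0$, $a>0$, $u_0>0$, and let $\texttt{sat}:\mathbb{R}\to\mathbb{R}$ be $\texttt{sat}(s)=-u_0$ if $s<-u_0$, $\texttt{sat}(s)=s$ if $-u_0\le s\le u_0$, $\texttt{sat}(s)=u_0$ if $s>u_0$. Let $A$ be the operator $Aw=-w'-w'''-a\,\texttt{sat}(w)$ (saturation applied pointwise) with domain $D(A)=H^3_L(0,L)=\{w\in H^3(0,L): w(0)=w(L)=w'(L)=0\}$, and equip $D(A)$ with the graph norm $\|u\|_{D(A)}^2:=\|u\|_{L^2(0,L)}^2+\|Au\|_{L^2(0,L)}^2$. Then the canonical embedding from $D(A)$ into $L^2(0,L)$ is compact: every sequence in $D(A)$ bounded in the graph norm has a subsequence converging strongly in $L^2(0,L)$.
   Context: $H^3(0,L)$ is the set of $u\in L^2(0,L)$ with $u_x,u_{xx},u_{xxx}\in L^2(0,L)$. *)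

theory Defs
  imports "HOL-Analysis.Analysis"
begin

definition sat :: "real \<Rightarrow> real \<Rightarrow> real" where
  "sat u0 s = (if s < - u0 then - u0 else if s \<le> u0 then s else u0)"

definition L2 :: "real \<Rightarrow> (real \<Rightarrow> real) \<Rightarrow> bool" where
  "L2 L f \<longleftrightarrow> set_borel_measurable lborel {0..L} f \<and>
               set_integrable lborel {0..L} (\<lambda>x. (f x)\<^sup>2)"

definition L2_norm_sq :: "real \<Rightarrow> (real \<Rightarrow> real) \<Rightarrow> real" where
  "L2_norm_sq L f = (LINT x:{0..L}|lborel. (f x)\<^sup>2)"

definition test_fun :: "real \<Rightarrow> (real \<Rightarrow> real) \<Rightarrow> bool" where
  "test_fun L \<phi> \<longleftrightarrow> (\<forall>k x. ((deriv ^^ k) \<phi>) differentiable (at x)) \<and>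
     (\<exists>c d. 0 < c \<and> c \<le> d \<and> d < L \<and> (\<forall>x. x \<notin> {c..d} \<longrightarrow> \<phi> x = 0))"

definition weak_deriv :: "real \<Rightarrow> (real \<Rightarrow> real) \<Rightarrow> (real \<Rightarrow> real) \<Rightarrow> bool" where
  "weak_deriv L u v \<longleftrightarrow> (\<forall>\<phi>. test_fun L \<phi> \<longrightarrow>
     (LINT x:{0..L}|lborel. u x * deriv \<phi> x) = - (LINT x:{0..L}|lborel. v x * \<phi> x))"

text \<open>Point values refer to the continuous representatives of w and w'.\<close>
definition in_H3L :: "real \<Rightarrow> (real \<Rightarrow> real) \<Rightarrow> (real \<Rightarrow> real) \<Rightarrow> (real \<Rightarrow> real)
                      \<Rightarrow> (real \<Rightarrow> real) \<Rightarrow> bool" where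
  "in_H3L L w w1 w2 w3 \<longleftrightarrow>
     L2 L w \<and> L2 L w1 \<and> L2 L w2 \<and> L2 L w3 \<and>
     weak_deriv L w w1 \<and> weak_deriv L w1 w2 \<and> weak_deriv L w2 w3 \<and>
     continuous_on {0..L} w \<and> continuous_on {0..L} w1 \<and>
     w 0 = 0 \<and> w L = 0 \<and> w1 L = 0"

definition A_op :: "real \<Rightarrow> real \<Rightarrow> (real \<Rightarrow> real) \<Rightarrow> (real \<Rightarrow> real) \<Rightarrow> (real \<Rightarrow> real)
                    \<Rightarrow> real \<Rightarrow> real" where
  "A_op a u0 w w1 w3 = (\<lambda>x. - w1 x - w3 x - a * sat u0 (w x))"

end

theory Submission imports Defs "HOL-Complex_Analysis.Great_Picard" "HOL-Computational_Algebra.Polynomial"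
begin


definition smooth_seq :: "(nat \<Rightarrow> real \<Rightarrow> real) \<Rightarrow> bool" where
  "smooth_seq D \<longleftrightarrow> (\<forall>k x. (D k has_real_derivative D (Suc k) x) (at x))"

lemma smooth_seq_funpow:
  assumes "smooth_seq D" shows "(deriv ^^ k) (D 0) = D k"
proof (induction k)
  case 0 then show ?case by simp
next
  case (Suc k)
  have "(deriv ^^ Suc k) (D 0) = deriv ((deriv ^^ k) (D 0))" by simp
  also have "\<dots> = deriv (D k)" using Suc by simp
  also have "\<dots> = D (Suc k)" using assms by (auto simp: smooth_seq_def intro!: ext DERIV_imp_deriv)
  finally show ?case .
qed

lemma smooth_seq_diff:
  assumes "smooth_seq D" shows "(deriv ^^ k) (D 0) differentiable (at x)"
  using assms smooth_seq_funpow[OF assms] unfolding smooth_seq_def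
  by (metis real_differentiable_def)

lemma smooth_seq_mult:
  assumes D: "smooth_seq D" and G: "smooth_seq G"
  shows "smooth_seq (\<lambda>k x. \<Sum>i = 0..k. of_nat (k choose i) * D i x * G (k-i) x)"
  unfolding smooth_seq_def
proof (intro allI)
  fix n x
  have *: "\<And>n. (D n has_field_derivative D (Suc n) x) (at x)"
          "\<And>n. (G n has_field_derivative G (Suc n) x) (at x)"
    using D G by (auto simp: smooth_seq_def)
  have sumeq: "(\<Sum>i = 0..n.
               of_nat (n choose i) * (D (Suc i) x * G (n-i) x + G (Suc (n-i)) x * D i x)) =
            G 0 x * D (Suc n) x + (\<Sum>i = 0..n. D i x * (of_nat (Suc n choose i) * G (Suc n - i) x))"
    apply (simp add: Suc_choose algebra_simps sum.distrib)
    apply (subst (4) sum_Suc_reindex)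
    apply (auto simp: algebra_simps Suc_diff_le intro: sum.cong)
    done
  show "((\<lambda>x. \<Sum>i = 0..n. of_nat (n choose i) * D i x * G (n-i) x) has_real_derivative
         (\<Sum>i = 0..Suc n. of_nat (Suc n choose i) * D i x * G (Suc n - i) x)) (at x)"
    apply (rule derivative_eq_intros | simp)+
    apply (auto intro: * )
    using sumeq by (simp add: algebra_simps Suc_diff_le)
qed

lemma smooth_seq_affine:
  assumes D: "smooth_seq D"
  shows "smooth_seq (\<lambda>k x. a ^ k * D k (a * x + b))"
  unfolding smooth_seq_def
proof (intro allI)
  fix k x
  have "(D k has_real_derivative D (Suc k) (a*x+b)) (at (a*x+b))" using D by (auto simp: smooth_seq_def)
  then have "((\<lambda>x. D k (a * x + b)) has_real_derivative D (Suc k) (a*x+b) * a) (at x)"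
    by (rule DERIV_chain2) (auto intro!: derivative_eq_intros)
  then show "((\<lambda>x. a ^ k * D k (a * x + b)) has_real_derivative a ^ Suc k * D (Suc k) (a * x + b)) (at x)"
    by (auto intro!: derivative_eq_intros simp: algebra_simps)
qed



lemma poly_div_exp_0: "((\<lambda>z. poly q z / exp z) \<longlongrightarrow> (0::real)) at_top"
proof -
  have "((\<lambda>z. \<Sum>i\<le>degree q. coeff q i * (z ^ i / exp z)) \<longlongrightarrow> (\<Sum>i\<le>degree q. coeff q i * 0)) at_top"
    by (intro tendsto_sum tendsto_mult tendsto_const tendsto_power_div_exp_0)
  then show ?thesis by (simp add: poly_altdef sum_divide_distrib)
qed

fun EP :: "nat \<Rightarrow> real poly" where
  "EP 0 = 1"
| "EP (Suc k) = [:0,0,1:] * (EP k - pderiv (EP k))"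

definition ED :: "nat \<Rightarrow> real \<Rightarrow> real" where
  "ED k x = (if x > 0 then poly (EP k) (1/x) * exp (- (1/x)) else 0)"

lemma ED_pos_deriv:
  assumes "x > 0"
  shows "((\<lambda>x. poly (EP k) (1/x) * exp (- (1/x))) has_real_derivative ED (Suc k) x) (at x)"
proof -
  have d1: "((\<lambda>x. poly (EP k) (1/x)) has_real_derivative poly (pderiv (EP k)) (1/x) * (- 1 / x^2)) (at x)"
    by (rule DERIV_chain2[OF poly_DERIV]) (use assms in \<open>auto intro!: derivative_eq_intros simp: power2_eq_square\<close>)
  have d2: "((\<lambda>x. exp (- (1/x))) has_real_derivative exp (- (1/x)) * (1 / x^2)) (at x)"
    using assms by (auto intro!: derivative_eq_intros simp: power2_eq_square field_simps)
  note DERIV_mult[OF d1 d2]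
  moreover have "poly (pderiv (EP k)) (1/x) * (- 1 / x^2) * exp (- (1/x)) + poly (EP k) (1/x) * (exp (- (1/x)) * (1 / x^2))
     = ED (Suc k) x"
    using assms by (simp add: ED_def algebra_simps power2_eq_square divide_simps)
  ultimately show ?thesis by (simp add: algebra_simps)
qed

lemma ED_smooth: "smooth_seq ED"
  unfolding smooth_seq_def
proof (intro allI)
  fix k and x :: real
  consider "x > 0" | "x < 0" | "x = 0" by linarith
  then show "(ED k has_real_derivative ED (Suc k) x) (at x)"
  proof cases
    case 1
    show ?thesis
      by (rule has_field_derivative_transform_within_open[OF ED_pos_deriv[OF 1], of "{0<..}"])
         (use 1 in \<open>auto simp: ED_def\<close>)
  next
    case 2
    have "((\<lambda>x. 0) has_real_derivative 0) (at x)" by simp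
    then have "((\<lambda>x. 0) has_real_derivative ED (Suc k) x) (at x)" using 2 by (simp add: ED_def)
    then show ?thesis
      by (rule has_field_derivative_transform_within_open[of _ _ _ "{..<0}"]) (use 2 in \<open>auto simp: ED_def\<close>)
  next
    case 3
    have "((\<lambda>y. (ED k y - ED k 0) / (y - 0)) \<longlongrightarrow> 0) (at 0)"
    proof (rule filterlim_split_at)
      have "eventually (\<lambda>y. 0 = (ED k y - ED k 0) / (y - 0)) (at_left (0::real))"
        by (rule eventually_at_leftI[of "-1"]) (auto simp: ED_def)
      then show "((\<lambda>y. (ED k y - ED k 0) / (y - 0)) \<longlongrightarrow> 0) (at_left 0)"
        by (rule Lim_transform_eventually[rotated]) simp
    next
      have lim: "((\<lambda>z. poly (pCons 0 (EP k)) z / exp z) \<longlongrightarrow> (0::real)) at_top"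
        by (rule poly_div_exp_0)
      have "eventually (\<lambda>z. poly (pCons 0 (EP k)) z / exp z = (ED k (inverse z) - ED k 0) / (inverse z - 0)) at_top"
        using eventually_gt_at_top[of 0]
        by eventually_elim (simp add: ED_def field_simps exp_minus)
      then have "((\<lambda>z. (ED k (inverse z) - ED k 0) / (inverse z - 0)) \<longlongrightarrow> (0::real)) at_top"
        using lim by (rule Lim_transform_eventually[rotated])
      then show "((\<lambda>y. (ED k y - ED k 0) / (y - 0)) \<longlongrightarrow> 0) (at_right 0)"
        by (simp add: filterlim_at_right_to_top)
    qed
    then have "(ED k has_real_derivative 0) (at 0)"
      by (simp add: has_field_derivative_iff)
    then show ?thesis using 3 by (simp add: ED_def)
  qed
qed

lemma ED_0: "ED 0 x = (if x > 0 then exp (- (1/x)) else 0)"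
  by (simp add: ED_def)



lemma smooth_seq_test_fun:
  assumes "smooth_seq D" "0 < c" "c \<le> d" "d < L" "\<And>x. x \<notin> {c..d} \<Longrightarrow> D 0 x = 0"
  shows "test_fun L (D 0)"
  unfolding test_fun_def using assms smooth_seq_diff[OF assms(1)] by blast

lemma test_fun_smooth_seq:
  assumes "test_fun L \<phi>"
  shows "smooth_seq (\<lambda>k. (deriv ^^ k) \<phi>)"
  unfolding smooth_seq_def
proof (intro allI)
  fix k x
  have "(deriv ^^ k) \<phi> differentiable (at x)" using assms by (auto simp: test_fun_def)
  then have "((deriv ^^ k) \<phi> has_real_derivative deriv ((deriv ^^ k) \<phi>) x) (at x)"
    by (simp add: DERIV_deriv_iff_real_differentiable)
  then show "((deriv ^^ k) \<phi> has_real_derivative (deriv ^^ Suc k) \<phi> x) (at x)" by simp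
qed

lemma test_fun_deriv:
  assumes "test_fun L \<phi>"
  shows "(\<phi> has_real_derivative deriv \<phi> x) (at x)"
  using test_fun_smooth_seq[OF assms] unfolding smooth_seq_def
  by (metis funpow_0 funpow_simps_right(2) o_apply One_nat_def)

lemma test_fun_support:
  assumes "test_fun L \<phi>"
  obtains c d where "0 < c" "c \<le> d" "d < L" "\<And>x. x \<notin> {c..d} \<Longrightarrow> \<phi> x = 0"
      "\<And>x. x \<notin> {c..d} \<Longrightarrow> deriv \<phi> x = 0"
proof -
  obtain c d where cd: "0 < c" "c \<le> d" "d < L" "\<And>x. x \<notin> {c..d} \<Longrightarrow> \<phi> x = 0"
    using assms by (auto simp: test_fun_def)
  have "deriv \<phi> x = 0" if "x \<notin> {c..d}" for x
  proof -
    have op: "open (- {c..d})" by auto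
    have "((\<lambda>x. 0) has_real_derivative 0) (at x)" by simp
    then have "(\<phi> has_real_derivative 0) (at x)"
      by (rule has_field_derivative_transform_within_open[OF _ op]) (use that cd in auto)
    then show ?thesis by (rule DERIV_imp_deriv)
  qed
  then show ?thesis using cd that by blast
qed

lemma test_fun_cont:
  assumes "test_fun L \<phi>"
  shows "continuous_on UNIV \<phi>" "continuous_on UNIV (deriv \<phi>)"
proof -
  have "\<phi> differentiable (at x)" for x using assms by (auto simp: test_fun_def dest: spec[of _ 0])
  then show "continuous_on UNIV \<phi>"
    by (simp add: continuous_at_imp_continuous_on differentiable_imp_continuous_within)
  have "(deriv ^^ 1) \<phi> differentiable (at x)" for x using assms unfolding test_fun_def by blast
  then have "deriv \<phi> differentiable (at x)" for x by simp
  then show "continuous_on UNIV (deriv \<phi>)"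
    by (simp add: continuous_at_imp_continuous_on differentiable_imp_continuous_within)
qed

lemma cont_support_bounded:
  fixes f :: "real \<Rightarrow> real"
  assumes "continuous_on UNIV f" "\<And>x. x \<notin> {c..d} \<Longrightarrow> f x = 0"
  shows "\<exists>B. \<forall>x. \<bar>f x\<bar> \<le> B"
proof -
  have "compact (f ` {c..d})"
    by (rule compact_continuous_image) (use assms(1) continuous_on_subset in auto)
  then obtain B where B: "\<And>y. y \<in> f ` {c..d} \<Longrightarrow> norm y \<le> B"
    using compact_imp_bounded bounded_iff by metis
  show ?thesis
  proof (intro exI allI)
    fix x show "\<bar>f x\<bar> \<le> max B 0"
      using B[of "f x"] assms(2)[of x] by (cases "x \<in> {c..d}") auto
  qed
qed

lemma test_fun_bounded:
  assumes "test_fun L \<phi>"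
  shows "\<exists>B. \<forall>x. \<bar>\<phi> x\<bar> \<le> B" "\<exists>B. \<forall>x. \<bar>deriv \<phi> x\<bar> \<le> B"
proof -
  obtain c d where "\<And>x. x \<notin> {c..d} \<Longrightarrow> \<phi> x = 0" "\<And>x. x \<notin> {c..d} \<Longrightarrow> deriv \<phi> x = 0"
    using test_fun_support[OF assms] by metis
  then show "\<exists>B. \<forall>x. \<bar>\<phi> x\<bar> \<le> B" "\<exists>B. \<forall>x. \<bar>deriv \<phi> x\<bar> \<le> B"
    using cont_support_bounded test_fun_cont[OF assms] by blast+
qed

lemma test_fun_borel:
  assumes "test_fun L \<phi>"
  shows "\<phi> \<in> borel_measurable borel" "deriv \<phi> \<in> borel_measurable borel"
  using test_fun_cont[OF assms] by (auto intro: borel_measurable_continuous_onI)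

lemma test_fun_ends:
  assumes "test_fun L \<phi>" "L > 0"
  shows "\<phi> 0 = 0" "\<phi> L = 0"
  using test_fun_support[OF assms(1)] by (metis atLeastAtMost_iff not_le)+

definition bump :: "real \<Rightarrow> real \<Rightarrow> nat \<Rightarrow> real \<Rightarrow> real" where
  "bump L a n x = ED 0 (real (Suc n) * x + (- real (Suc n) * a - 1)) *
                  ED 0 ((- real (Suc n)) * x + (real (Suc n) * L - 1))"

lemma bump_test:
  assumes "0 \<le> a" "a < L"
  shows "test_fun L (bump L a n)"
proof -
  define m where "m = real (Suc n)"
  have m: "m \<ge> 1" by (simp add: m_def)
  let ?D = "\<lambda>k x. \<Sum>i = 0..k. of_nat (k choose i) *
     (m ^ i * ED i (m * x + (- m * a - 1))) * ((- m) ^ (k-i) * ED (k-i) ((- m) * x + (m * L - 1)))"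
  have sm: "smooth_seq ?D"
    by (rule smooth_seq_mult[OF smooth_seq_affine[OF ED_smooth, of m "- m * a - 1"] smooth_seq_affine[OF ED_smooth, of "- m" "m * L - 1"]])
  have D0: "?D 0 = bump L a n" by (auto simp: bump_def m_def)
  have z1: "bump L a n x = 0" if "x \<le> a + 1/m" for x
  proof -
    have "m * x \<le> m * a + 1" using that m by (simp add: field_simps)
    then have "\<not> 0 < m * x + (- m * a - 1)" by linarith
    then show ?thesis unfolding bump_def m_def[symmetric] by (simp add: ED_def)
  qed
  have z2: "bump L a n x = 0" if "x \<ge> L - 1/m" for x
  proof -
    have "m * x \<ge> m * L - 1" using that m by (simp add: field_simps)
    then have "\<not> 0 < (- m) * x + (m * L - 1)" by linarith
    then show ?thesis unfolding bump_def m_def[symmetric] by (simp add: ED_def)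
  qed
  show ?thesis
  proof (cases "a + 1/m \<le> L - 1/m")
    case True
    have "1/m > 0" using m by simp
    have "test_fun L (?D 0)"
    proof (rule smooth_seq_test_fun[OF sm, of "a + 1/m" "L - 1/m" L])
      show "0 < a + 1 / m" "a + 1 / m \<le> L - 1 / m" "L - 1 / m < L" using True \<open>1/m > 0\<close> assms by (auto simp del: divide_pos_pos) (use \<open>1/m > 0\<close> in linarith)
      show "?D 0 x = 0" if "x \<notin> {a + 1 / m..L - 1 / m}" for x
      proof -
        have "bump L a n x = 0" using that z1[of x] z2[of x] by force
        moreover have "?D 0 x = bump L a n x" using D0 by (rule fun_cong)
        ultimately show ?thesis by simp
      qed
    qed
    then show ?thesis using D0 by simp
  next
    case False
    have "bump L a n x = 0" for x using z1[of x] z2[of x] False by linarith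
    then have "?D 0 x = 0" for x using fun_cong[OF D0, of x] by simp
    then have "test_fun L (?D 0)"
      using smooth_seq_test_fun[OF sm, of "L/2" "L/2" L] assms by auto
    then show ?thesis using D0 by simp
  qed
qed

lemma bump_bounds: "0 \<le> bump L a n x" "bump L a n x \<le> 1"
  unfolding bump_def ED_def by (auto intro!: mult_le_one)

lemma bump_lim: "(\<lambda>n. bump L a n x) \<longlonglongrightarrow> indicator {a<..<L} x"
proof (cases "a < x \<and> x < L")
  case True
  then have p1: "x - a > 0" and p2: "L - x > 0" by auto
  have "\<forall>\<^sub>F n in sequentially. bump L a n x =
      exp (- (1 / (real (Suc n) * (x - a) - 1))) * exp (- (1 / (real (Suc n) * (L - x) - 1)))"
  proof -
    have e1: "\<forall>\<^sub>F n in sequentially. real (Suc n) * (x - a) - 1 > 0"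
      using p1 by real_asymp
    have e2: "\<forall>\<^sub>F n in sequentially. real (Suc n) * (L - x) - 1 > 0"
      using p2 by real_asymp
    from e1 e2 show ?thesis
      by eventually_elim (simp add: bump_def ED_def algebra_simps)
  qed
  moreover have "(\<lambda>n. exp (- (1 / (real (Suc n) * (x - a) - 1))) * exp (- (1 / (real (Suc n) * (L - x) - 1))))
     \<longlonglongrightarrow> 1"
    using p1 p2 by real_asymp
  ultimately have "(\<lambda>n. bump L a n x) \<longlonglongrightarrow> 1"
    using tendsto_cong by fastforce
  then show ?thesis using True by simp
next
  case False
  have "bump L a n x = 0" for n
  proof (cases "x \<le> a")
    case True
    then have "real (Suc n) * x \<le> real (Suc n) * a" by (simp add: mult_left_mono)
    then have "\<not> 0 < real (Suc n) * x + (- real (Suc n) * a - 1)" by linarith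
    then show ?thesis unfolding bump_def by (simp only: ED_def if_False mult_zero_left)
  next
    case F: False
    then have "x \<ge> L" using False by auto
    then have "real (Suc n) * x \<ge> real (Suc n) * L" by (simp add: mult_left_mono)
    then have "\<not> 0 < (- real (Suc n)) * x + (real (Suc n) * L - 1)" by linarith
    then show ?thesis unfolding bump_def by (simp only: ED_def if_False mult_zero_right)
  qed
  then show ?thesis using False by simp
qed

lemma bump_conv:
  assumes h: "set_integrable lborel {0..L} h" and a: "0 \<le> a" "a < L"
  shows "(\<lambda>n. LINT x:{0..L}|lborel. h x * bump L a n x) \<longlonglongrightarrow> (LINT x:{0..L}|lborel. h x * indicator {a<..<L} x)"
proof -
  have hm: "(\<lambda>x. indicator {0..L} x *\<^sub>R h x) \<in> borel_measurable lborel"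
    using h by (auto simp: set_integrable_def)
  have bm: "bump L a n \<in> borel_measurable lborel" for n
    using test_fun_borel(1)[OF bump_test[OF a, of n]] by simp
  show ?thesis
    unfolding set_lebesgue_integral_def
  proof (rule integral_dominated_convergence[where w = "\<lambda>x. norm (indicator {0..L} x *\<^sub>R h x)"])
    show "(\<lambda>x. indicator {0..L} x *\<^sub>R (h x * indicator {a<..<L} x)) \<in> borel_measurable lborel"
      using hm by (simp add: mult.assoc[symmetric])
    show "(\<lambda>x. indicator {0..L} x *\<^sub>R (h x * bump L a n x)) \<in> borel_measurable lborel" for n
      using hm bm[of n] by (simp add: mult.assoc[symmetric])
    show "integrable lborel (\<lambda>x. norm (indicator {0..L} x *\<^sub>R h x))"
      using h by (simp add: set_integrable_def)
    show "AE x in lborel. (\<lambda>n. indicator {0..L} x *\<^sub>R (h x * bump L a n x)) \<longlonglongrightarrow>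
            indicator {0..L} x *\<^sub>R (h x * indicator {a<..<L} x)"
      by (intro AE_I2 tendsto_intros bump_lim)
    show "AE x in lborel. norm (indicator {0..L} x *\<^sub>R (h x * bump L a n x)) \<le> norm (indicator {0..L} x *\<^sub>R h x)" for n
      using bump_bounds[of L a n] by (intro AE_I2) (auto simp: abs_mult indicator_def intro: mult_left_le)
  qed
qed



lemma FL_intervals:
  assumes L: "L > 0" and h: "set_integrable lborel {0..L} h"
    and test: "\<And>\<psi>. test_fun L \<psi> \<Longrightarrow> (LINT x:{0..L}|lborel. h x * \<psi> x) = 0"
    and a: "0 \<le> a" "a < L"
  shows "(LINT x:{0..L}|lborel. h x * indicator {a<..<L} x) = 0"
proof -
  have "(\<lambda>n. LINT x:{0..L}|lborel. h x * bump L a n x) \<longlonglongrightarrow> (LINT x:{0..L}|lborel. h x * indicator {a<..<L} x)"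
    by (rule bump_conv[OF h a])
  moreover have "(\<lambda>n. LINT x:{0..L}|lborel. h x * bump L a n x) = (\<lambda>n. 0)"
    using test[OF bump_test[OF a]] by simp
  ultimately show ?thesis using LIMSEQ_unique[OF tendsto_const] by metis
qed

lemma FL0:
  assumes L: "L > 0" and h: "set_integrable lborel {0..L} h"
    and test: "\<And>\<psi>. test_fun L \<psi> \<Longrightarrow> (LINT x:{0..L}|lborel. h x * \<psi> x) = 0"
  shows "AE x in lborel. x \<in> {0..L} \<longrightarrow> h x = 0"
proof -
  define hh where "hh y = indicator {0..L} y * h y" for y :: real
  have hhi: "integrable lborel hh" using h unfolding set_integrable_def hh_def[abs_def] by simp
  have hhm[measurable]: "hh \<in> borel_measurable lborel" using hhi by auto
  have step2: "(LINT y|lborel. hh y * indicator {x<..} y) = 0" for x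
  proof (cases "x < L")
    case False
    then have "(\<lambda>y. hh y * indicator {x<..} y) = (\<lambda>y. 0)" by (auto simp: hh_def indicator_def)
    then show ?thesis by simp
  next
    case True
    define a where "a = max x 0"
    have a: "0 \<le> a" "a < L" using True L by (auto simp: a_def)
    have "AE y in lborel. hh y * indicator {x<..} y = indicator {0..L} y *\<^sub>R (h y * indicator {a<..<L} y)"
      using AE_lborel_singleton[of 0] AE_lborel_singleton[of L]
      by eventually_elim (auto simp: hh_def indicator_def a_def)
    then have "(LINT y|lborel. hh y * indicator {x<..} y) = (LINT y:{0..L}|lborel. h y * indicator {a<..<L} y)"
    proof -
      have hm: "(\<lambda>y. indicator {0..L} y *\<^sub>R h y) \<in> borel_measurable lborel"
        using h by (auto simp: set_integrable_def)
      have "(\<lambda>y. indicator {0..L} y *\<^sub>R (h y * indicator {a<..<L} y)) \<in> borel_measurable lborel"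
        using hm by (simp add: mult.assoc[symmetric])
      then show ?thesis
        unfolding set_lebesgue_integral_def using \<open>AE y in lborel. _ = _\<close>
        by (intro integral_cong_AE) auto
    qed
    also have "\<dots> = 0" by (rule FL_intervals[OF L h test a]) auto
    finally show ?thesis .
  qed
  define hp where "hp y = max 0 (hh y)" for y
  define hn where "hn y = max 0 (- hh y)" for y
  have hpi: "integrable lborel hp" and hni: "integrable lborel hn"
    using hhi unfolding hp_def[abs_def] hn_def[abs_def] by auto
  have hpnn: "\<And>y. hp y \<ge> 0" and hnnn: "\<And>y. hn y \<ge> 0" by (auto simp: hp_def hn_def)
  have hpn: "hp y - hn y = hh y" for y by (auto simp: hp_def hn_def max_def)
  have [measurable]: "hp \<in> borel_measurable lborel" "hn \<in> borel_measurable lborel"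
    using hpi hni by auto
  have em: "emeasure (density lborel (\<lambda>y. ennreal (f y))) {x<..} = ennreal (LINT y|lborel. f y * indicator {x<..} y)"
    if fi: "integrable lborel f" and fnn: "\<And>y. f y \<ge> 0" for f :: "real \<Rightarrow> real" and x :: real
  proof -
    have [measurable]: "f \<in> borel_measurable lborel" using fi by auto
    have "emeasure (density lborel (\<lambda>y. ennreal (f y))) {x<..} = (\<integral>\<^sup>+ y. ennreal (f y) * indicator {x<..} y \<partial>lborel)"
      by (rule emeasure_density) simp_all
    also have "\<dots> = (\<integral>\<^sup>+ y. ennreal (f y * indicator {x<..} y) \<partial>lborel)"
      by (auto intro!: nn_integral_cong simp: indicator_def)
    also have "\<dots> = ennreal (LINT y|lborel. f y * indicator {x<..} y)"
      by (rule nn_integral_eq_integral) (use fi fnn in \<open>auto intro!: integrable_real_mult_indicator\<close>)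
    finally show ?thesis .
  qed
  have eqM: "density lborel (\<lambda>y. ennreal (hp y)) = density lborel (\<lambda>y. ennreal (hn y))"
  proof (rule measure_eqI_lessThan)
    show "sets (density lborel (\<lambda>y. ennreal (hp y))) = sets borel"
         "sets (density lborel (\<lambda>y. ennreal (hn y))) = sets borel" by auto
    show "emeasure (density lborel (\<lambda>y. ennreal (hp y))) {x<..} < \<infinity>" for x
      using em[OF hpi hpnn, of x] by simp
    show "emeasure (density lborel (\<lambda>y. ennreal (hp y))) {x<..} = emeasure (density lborel (\<lambda>y. ennreal (hn y))) {x<..}" for x
    proof -
      have "(LINT y|lborel. hp y * indicator {x<..} y) - (LINT y|lborel. hn y * indicator {x<..} y)
          = (LINT y|lborel. hp y * indicator {x<..} y - hn y * indicator {x<..} y)"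
        by (rule Bochner_Integration.integral_diff[symmetric]) (auto intro!: integrable_real_mult_indicator hpi hni)
      also have "\<dots> = (LINT y|lborel. hh y * indicator {x<..} y)"
        by (rule Bochner_Integration.integral_cong) (simp_all add: left_diff_distrib[symmetric] hpn)
      also have "\<dots> = 0" by (rule step2)
      finally show ?thesis using em[OF hpi hpnn, of x] em[OF hni hnnn, of x] by simp
    qed
  qed
  have "AE y in lborel. ennreal (hp y) = ennreal (hn y)"
    using sigma_finite_measure.density_unique_iff[OF sigma_finite_lborel, of "\<lambda>y. ennreal (hp y)" "\<lambda>y. ennreal (hn y)"] eqM by simp
  then show ?thesis
  proof eventually_elim
    case (elim y)
    then have "hp y = hn y" using hpnn[of y] hnnn[of y] by simp
    then have "hh y = 0" unfolding hp_def hn_def by (simp add: max_def split: if_splits)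
    then show ?case by (simp add: hh_def indicator_def)
  qed
qed



lemma si_mult_bounded:
  fixes g f :: "real \<Rightarrow> real"
  assumes g: "set_integrable lborel S g" and f: "f \<in> borel_measurable borel"
    and B: "\<And>x. \<bar>f x\<bar> \<le> B"
  shows "set_integrable lborel S (\<lambda>x. g x * f x)"
  unfolding set_integrable_def
proof (rule Bochner_Integration.integrable_bound[where M=lborel and f="\<lambda>x. B * (indicator S x *\<^sub>R g x)"])
  show "integrable lborel (\<lambda>x. B * (indicator S x *\<^sub>R g x))"
    using g by (auto simp: set_integrable_def)
  have "(\<lambda>x. indicator S x *\<^sub>R g x) \<in> borel_measurable lborel"
    using g by (auto simp: set_integrable_def)
  then show "(\<lambda>x. indicator S x *\<^sub>R (g x * f x)) \<in> borel_measurable lborel"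
    using f by (simp add: mult.assoc[symmetric])
  have "B \<ge> 0" using B[of 0] by simp
  then show "AE x in lborel. norm (indicator S x *\<^sub>R (g x * f x)) \<le> norm (B * (indicator S x *\<^sub>R g x))"
    using B by (intro AE_I2) (auto simp: abs_mult indicator_def mult.commute intro: mult_right_mono)
qed

lemma exists_test_nonzero:
  assumes L: "L > 0"
  shows "\<exists>\<psi>. test_fun L \<psi> \<and> (LINT x:{0..L}|lborel. \<psi> x) \<noteq> 0"
proof (rule ccontr)
  assume "\<not> ?thesis"
  then have z: "(LINT x:{0..L}|lborel. 1 * bump L 0 n x) = 0" for n
    using bump_test[of 0 L n] L by auto
  have "set_integrable lborel {0..L} (\<lambda>x. 1::real)"
    by (rule borel_integrable_atLeastAtMost') simp
  from bump_conv[OF this, of 0] L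
  have "(\<lambda>n. 0) \<longlonglongrightarrow> (LINT x:{0..L}|lborel. (1::real) * indicator {0<..<L} x)"
    using z by simp
  then have "(LINT x:{0..L}|lborel. (1::real) * indicator {0<..<L} x) = (0::real)"
    using LIMSEQ_unique[OF tendsto_const] by metis
  moreover have "(LINT x:{0..L}|lborel. (1::real) * indicator {0<..<L} x) = L"
  proof -
    have "(LINT x:{0..L}|lborel. (1::real) * indicator {0<..<L} x) = (LINT x|lborel. indicator {0<..<L} x)"
      unfolding set_lebesgue_integral_def by (rule Bochner_Integration.integral_cong) (auto simp: indicator_def)
    also have "\<dots> = L" using L by simp
    finally show ?thesis .
  qed
  ultimately show False using L by simp
qed

lemma smooth_seq_lin:
  assumes "smooth_seq D" "smooth_seq G"
  shows "smooth_seq (\<lambda>j x. D j x - k * G j x)"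
  using assms unfolding smooth_seq_def by (auto intro!: derivative_eq_intros)

lemma antideriv_test:
  assumes L: "L > 0" and D: "smooth_seq D" and cd: "0 < c" "c \<le> d" "d < L"
    and z: "\<And>x. x \<notin> {c..d} \<Longrightarrow> D 0 x = 0"
    and int0: "(LINT x:{0..L}|lborel. D 0 x) = 0"
  shows "\<exists>\<Phi>. test_fun L \<Phi> \<and> (\<forall>x. deriv \<Phi> x = D 0 x)"
proof -
  define c' where "c' = c / 2"
  define d' where "d' = (d + L) / 2"
  have cd': "0 < c'" "c' < c" "d < d'" "d' < L" "c' \<le> d'" using cd by (auto simp: c'_def d'_def)
  have z': "D 0 x = 0" if "x \<le> c' \<or> x \<ge> d'" for x using z[of x] that cd' by auto
  have cont: "continuous_on UNIV (D 0)"
    using D unfolding smooth_seq_def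
    by (meson DERIV_isCont continuous_at_imp_continuous_on)
  have intg: "D 0 integrable_on {a..b}" for a b
    by (rule integrable_continuous_real) (use cont continuous_on_subset in blast)
  define \<Phi> where "\<Phi> x = integral {c'-1..x} (D 0)" for x
  have zint: "integral {a..b} (D 0) = 0" if "\<And>t. t \<in> {a..b} \<Longrightarrow> D 0 t = 0" for a b
  proof -
    have "integral {a..b} (D 0) = integral {a..b} (\<lambda>t. 0::real)"
      by (rule integral_cong) (use that in auto)
    then show ?thesis by simp
  qed
  have Phi_lo: "\<Phi> x = 0" if "x \<le> c'" for x
    unfolding \<Phi>_def by (rule zint) (use that z' in auto)
  have mid: "integral {a..b} (D 0) = integral {c'..d'} (D 0)" if "a \<le> c'" "d' \<le> b" for a b
  proof -
    have "integral {a..b} (D 0) = integral {a..c'} (D 0) + integral {c'..b} (D 0)"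
      by (rule Henstock_Kurzweil_Integration.integral_combine[symmetric]) (use that cd' intg in auto)
    also have "integral {c'..b} (D 0) = integral {c'..d'} (D 0) + integral {d'..b} (D 0)"
      by (rule Henstock_Kurzweil_Integration.integral_combine[symmetric]) (use that cd' intg in auto)
    also have "integral {a..c'} (D 0) = 0" by (rule zint) (use z' in auto)
    also have "integral {d'..b} (D 0) = 0" by (rule zint) (use z' in auto)
    finally show ?thesis by simp
  qed
  have "integral {0..L} (D 0) = 0"
  proof -
    have "set_integrable lborel {0..L} (D 0)"
      by (rule borel_integrable_atLeastAtMost') (use cont continuous_on_subset in blast)
    then have "(LINT x:{0..L}|lborel. D 0 x) = integral {0..L} (D 0)"
      by (rule set_borel_integral_eq_integral)
    then show ?thesis using int0 by simp
  qed
  then have mid0: "integral {c'..d'} (D 0) = 0" using mid[of 0 L] cd' by simp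
  have Phi_hi: "\<Phi> x = 0" if "x \<ge> d'" for x
    unfolding \<Phi>_def using mid[of "c'-1" x] that mid0 by simp
  have der: "(\<Phi> has_real_derivative D 0 x) (at x)" for x
  proof (cases "x < c'")
    case True
    have "((\<lambda>x. 0) has_real_derivative 0) (at x)" by simp
    then have "((\<lambda>x. 0) has_real_derivative D 0 x) (at x)" using z'[of x] True by simp
    then show ?thesis
      by (rule has_field_derivative_transform_within_open[of _ _ _ "{..<c'}"]) (use True Phi_lo in auto)
  next
    case False
    have "(\<Phi> has_real_derivative D 0 x) (at x within {c'-1..x+1})"
      unfolding \<Phi>_def
      by (rule integral_has_real_derivative) (use False cont continuous_on_subset in auto)
    moreover have "at x within {c'-1..x+1} = at x"
      by (rule at_within_interior) (use False in auto)
    ultimately show ?thesis by simp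
  qed
  define S where "S k = (case k of 0 \<Rightarrow> \<Phi> | Suc j \<Rightarrow> D j)" for k
  have sm: "smooth_seq S"
    unfolding smooth_seq_def
  proof (intro allI)
    fix k x show "(S k has_real_derivative S (Suc k) x) (at x)"
      using der D by (cases k) (auto simp: S_def smooth_seq_def)
  qed
  have "test_fun L (S 0)"
    by (rule smooth_seq_test_fun[OF sm, of c' d']) (use cd' Phi_lo Phi_hi in \<open>auto simp: S_def\<close>)
  moreover have "deriv \<Phi> x = D 0 x" for x using der by (rule DERIV_imp_deriv)
  ultimately show ?thesis by (auto simp: S_def)
qed



lemma test_si:
  assumes "test_fun L \<psi>" shows "set_integrable lborel {0..L} \<psi>"
  by (rule borel_integrable_atLeastAtMost') (use test_fun_cont(1)[OF assms] continuous_on_subset in blast)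

lemma test_si_mult:
  assumes "test_fun L \<psi>" "set_integrable lborel {0..L} g"
  shows "set_integrable lborel {0..L} (\<lambda>x. g x * \<psi> x)"
proof -
  obtain B where "\<forall>x. \<bar>\<psi> x\<bar> \<le> B" using test_fun_bounded(1)[OF assms(1)] by blast
  then show ?thesis using si_mult_bounded[OF assms(2) test_fun_borel(1)[OF assms(1)]] by blast
qed

lemma test_si_mult_deriv:
  assumes "test_fun L \<psi>" "set_integrable lborel {0..L} g"
  shows "set_integrable lborel {0..L} (\<lambda>x. g x * deriv \<psi> x)"
proof -
  obtain B where "\<forall>x. \<bar>deriv \<psi> x\<bar> \<le> B" using test_fun_bounded(2)[OF assms(1)] by blast
  then show ?thesis using si_mult_bounded[OF assms(2) test_fun_borel(2)[OF assms(1)]] by blast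
qed

lemma si_const: "set_integrable lborel {a..b::real} (\<lambda>x. c::real)"
  by (rule borel_integrable_atLeastAtMost') simp

lemma FL1:
  assumes L: "L > 0" and g: "set_integrable lborel {0..L} g"
    and der: "\<And>\<phi>. test_fun L \<phi> \<Longrightarrow> (LINT x:{0..L}|lborel. g x * deriv \<phi> x) = 0"
  shows "\<exists>c. AE x in lborel. x \<in> {0..L} \<longrightarrow> g x = c"
proof -
  obtain \<psi>0 where t0: "test_fun L \<psi>0" and I0: "(LINT x:{0..L}|lborel. \<psi>0 x) \<noteq> 0"
    using exists_test_nonzero[OF L] by blast
  define I0 where "I0 = (LINT x:{0..L}|lborel. \<psi>0 x)"
  define c where "c = (LINT x:{0..L}|lborel. g x * \<psi>0 x) / I0"
  have gc: "set_integrable lborel {0..L} (\<lambda>x. g x - c)"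
    by (rule set_integral_diff(1)[OF g si_const])
  have "AE x in lborel. x \<in> {0..L} \<longrightarrow> g x - c = 0"
  proof (rule FL0[OF L gc])
    fix \<psi> assume t: "test_fun L \<psi>"
    define k where "k = (LINT x:{0..L}|lborel. \<psi> x) / I0"
    define D where "D j x = (deriv ^^ j) \<psi> x - k * (deriv ^^ j) \<psi>0 x" for j x
    have sm: "smooth_seq D"
      unfolding D_def[abs_def] by (rule smooth_seq_lin[OF test_fun_smooth_seq[OF t] test_fun_smooth_seq[OF t0]])
    obtain c1 d1 where cd1: "0 < c1" "c1 \<le> d1" "d1 < L" "\<And>x. x \<notin> {c1..d1} \<Longrightarrow> \<psi> x = 0"
      using test_fun_support[OF t] by metis
    obtain c2 d2 where cd2: "0 < c2" "c2 \<le> d2" "d2 < L" "\<And>x. x \<notin> {c2..d2} \<Longrightarrow> \<psi>0 x = 0"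
      using test_fun_support[OF t0] by metis
    have D0: "D 0 x = \<psi> x - k * \<psi>0 x" for x by (simp add: D_def)
    have "(LINT x:{0..L}|lborel. D 0 x) = (LINT x:{0..L}|lborel. \<psi> x) - k * I0"
      unfolding D0 I0_def using test_si[OF t] test_si[OF t0] by simp
    also have "\<dots> = 0" using I0 by (simp add: k_def I0_def)
    finally have int0: "(LINT x:{0..L}|lborel. D 0 x) = 0" .
    have "\<exists>\<Phi>. test_fun L \<Phi> \<and> (\<forall>x. deriv \<Phi> x = D 0 x)"
    proof (rule antideriv_test[OF L sm, of "min c1 c2" "max d1 d2"])
      show "0 < min c1 c2" "min c1 c2 \<le> max d1 d2" "max d1 d2 < L" using cd1 cd2 by auto
      show "D 0 x = 0" if "x \<notin> {min c1 c2..max d1 d2}" for x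
      proof -
        have "x \<notin> {c1..d1}" "x \<notin> {c2..d2}" using that by auto
        then show ?thesis using cd1(4)[of x] cd2(4)[of x] by (simp add: D0)
      qed
    qed (rule int0)
    then obtain \<Phi> where tP: "test_fun L \<Phi>" and dP: "\<And>x. deriv \<Phi> x = D 0 x" by blast
    have "0 = (LINT x:{0..L}|lborel. g x * deriv \<Phi> x)" using der[OF tP] by simp
    also have "\<dots> = (LINT x:{0..L}|lborel. g x * \<psi> x - k * (g x * \<psi>0 x))"
      by (simp add: dP D0 algebra_simps)
    also have "\<dots> = (LINT x:{0..L}|lborel. g x * \<psi> x) - k * (LINT x:{0..L}|lborel. g x * \<psi>0 x)"
      using test_si_mult[OF t g] test_si_mult[OF t0 g] by simp
    finally have e1: "(LINT x:{0..L}|lborel. g x * \<psi> x) = k * (LINT x:{0..L}|lborel. g x * \<psi>0 x)" by simp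
    have "(LINT x:{0..L}|lborel. (g x - c) * \<psi> x) = (LINT x:{0..L}|lborel. g x * \<psi> x - c * \<psi> x)"
      by (simp add: algebra_simps)
    also have "\<dots> = (LINT x:{0..L}|lborel. g x * \<psi> x) - c * (LINT x:{0..L}|lborel. \<psi> x)"
      using test_si_mult[OF t g] test_si[OF t] by simp
    also have "\<dots> = 0" using e1 I0 by (simp add: k_def c_def I0_def)
    finally show "(LINT x:{0..L}|lborel. (g x - c) * \<psi> x) = 0" .
  qed
  then show ?thesis by auto
qed



lemma cont_bounded_Icc:
  fixes f :: "real \<Rightarrow> real"
  assumes "continuous_on {a..b} f"
  obtains B where "B \<ge> 0" "\<And>x. x \<in> {a..b} \<Longrightarrow> \<bar>f x\<bar> \<le> B"
proof -
  have "compact (f ` {a..b})" by (rule compact_continuous_image[OF assms]) simp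
  then obtain B where B: "\<And>y. y \<in> f ` {a..b} \<Longrightarrow> norm y \<le> B"
    using compact_imp_bounded bounded_iff by metis
  show ?thesis
    by (rule that[of "max B 0"]) (use B in force)+
qed

lemma ibp_ac:
  fixes v h h' :: "real \<Rightarrow> real"
  assumes L: "0 \<le> L" and v: "set_integrable lborel {0..L} v"
    and hd: "\<And>x. x \<in> {0..L} \<Longrightarrow> (h has_real_derivative h' x) (at x within {0..L})"
    and hc: "continuous_on {0..L} h'"
  shows "(LINT x:{0..L}|lborel. h' x * (LINT t:{0..x}|lborel. v t))
       = h L * (LINT t:{0..L}|lborel. v t) - (LINT t:{0..L}|lborel. h t * v t)"
proof -
  define V where "V t = indicator {0..L} t * v t" for t
  define H where "H x = indicator {0..L} x * h' x" for x
  have Vi: "integrable lborel V" using v unfolding set_integrable_def V_def[abs_def] by simp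
  have [measurable]: "V \<in> borel_measurable lborel" using Vi by auto
  have [measurable]: "H \<in> borel_measurable lborel"
    using borel_measurable_continuous_on_indicator[OF _ hc] unfolding H_def[abs_def] by simp
  obtain B where B0: "B \<ge> 0" and B: "\<And>x. x \<in> {0..L} \<Longrightarrow> \<bar>h' x\<bar> \<le> B"
    using cont_bounded_Icc[OF hc] by metis
  have HB: "\<bar>H x\<bar> \<le> B * indicator {0..L} x" for x
    using B[of x] B0 by (auto simp: H_def indicator_def)
  define F where "F x t = H x * V t * of_bool (t \<le> x)" for x t
  have Fm[measurable]: "case_prod F \<in> borel_measurable (lborel \<Otimes>\<^sub>M lborel)"
    unfolding F_def by measurable
  have Fb: "\<bar>F x t\<bar> \<le> B * indicator {0..L} x * \<bar>V t\<bar>" for x t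
    using HB[of x] by (auto simp: F_def abs_mult intro!: mult_right_mono)
  have Fi2: "integrable lborel (F x)" for x
  proof (rule Bochner_Integration.integrable_bound[where f="\<lambda>t. B * indicator {0..L} x * \<bar>V t\<bar>"])
    show "integrable lborel (\<lambda>t. B * indicator {0..L} x * \<bar>V t\<bar>)" using Vi by simp
    show "F x \<in> borel_measurable lborel" unfolding F_def by measurable
    have "0 \<le> B * indicator {0..L} x * \<bar>V t\<bar>" for t using B0 by simp
    then show "AE t in lborel. norm (F x t) \<le> norm (B * indicator {0..L} x * \<bar>V t\<bar>)"
      using Fb by (intro AE_I2) (metis abs_of_nonneg real_norm_def)
  qed
  have Fint: "integrable (lborel \<Otimes>\<^sub>M lborel) (case_prod F)"
  proof (rule lborel_pair.Fubini_integrable[OF Fm])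
    show "AE x in lborel. integrable lborel (\<lambda>y. case_prod F (x, y))" using Fi2 by simp
    have m1: "(\<lambda>x. LINT y|lborel. norm (case_prod F (x, y))) \<in> borel_measurable lborel"
      by measurable
    have b1: "norm (LINT y|lborel. norm (case_prod F (x, y))) \<le> norm (indicator {0..L} x *\<^sub>R (B * (LINT t|lborel. \<bar>V t\<bar>)))" for x
    proof -
      have "(LINT y|lborel. norm (F x y)) \<le> (LINT y|lborel. B * indicator {0..L} x * \<bar>V y\<bar>)"
        by (rule integral_mono) (use Fi2[of x] Vi Fb in auto)
      also have "\<dots> = indicator {0..L} x *\<^sub>R (B * (LINT t|lborel. \<bar>V t\<bar>))" by simp
      finally show ?thesis using B0 by (simp add: integral_nonneg_AE)
    qed
    have i1: "integrable lborel (\<lambda>x. indicator {0..L} x *\<^sub>R (B * (LINT t|lborel. \<bar>V t\<bar>)))"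
      using si_const[of 0 L "B * (LINT t|lborel. \<bar>V t\<bar>)"] unfolding set_integrable_def .
    show "integrable lborel (\<lambda>x. LINT y|lborel. norm (case_prod F (x, y)))"
      by (rule Bochner_Integration.integrable_bound[OF i1 m1]) (intro AE_I2 b1)
  qed
  have lhs: "(LINT x:{0..L}|lborel. h' x * (LINT t:{0..x}|lborel. v t)) = (LINT x|lborel. LINT t|lborel. F x t)"
    unfolding set_lebesgue_integral_def
  proof (rule Bochner_Integration.integral_cong[OF refl])
    fix x
    show "indicator {0..L} x *\<^sub>R (h' x * (LINT t|lborel. indicator {0..x} t *\<^sub>R v t)) = (LINT t|lborel. F x t)"
    proof (cases "x \<in> {0..L}")
      case True
      have "(LINT t|lborel. F x t) = H x * (LINT t|lborel. V t * of_bool (t \<le> x))"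
        unfolding F_def by (simp add: mult.assoc)
      also have "(LINT t|lborel. V t * of_bool (t \<le> x)) = (LINT t|lborel. indicator {0..x} t *\<^sub>R v t)"
        by (rule Bochner_Integration.integral_cong) (use True in \<open>auto simp: V_def indicator_def\<close>)
      finally show ?thesis using True by (simp add: H_def)
    next
      case False
      then show ?thesis by (simp add: F_def H_def)
    qed
  qed
  have inner: "(LINT x|lborel. F x t) = V t * (h L - h t)" for t
  proof (cases "t \<in> {0..L}")
    case True
    have "(LINT x|lborel. F x t) = V t * (LINT x|lborel. indicator {t..L} x *\<^sub>R h' x)"
    proof -
      have "(LINT x|lborel. F x t) = (LINT x|lborel. V t * (indicator {t..L} x *\<^sub>R h' x))"
        by (rule Bochner_Integration.integral_cong) (use True in \<open>auto simp: F_def H_def indicator_def\<close>)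
      then show ?thesis by simp
    qed
    also have "(LINT x|lborel. indicator {t..L} x *\<^sub>R h' x) = h L - h t"
    proof (rule integral_FTC_atLeastAtMost)
      show "t \<le> L" using True by simp
      show "continuous_on {t..L} h'" using hc True continuous_on_subset by fastforce
      fix x assume "t \<le> x" "x \<le> L"
      then have "(h has_real_derivative h' x) (at x within {0..L})" using hd True by auto
      then have "(h has_real_derivative h' x) (at x within {t..L})"
        by (rule DERIV_subset) (use True in auto)
      then show "(h has_vector_derivative h' x) (at x within {t..L})"
        by (simp add: has_real_derivative_iff_has_vector_derivative)
    qed
    finally show ?thesis .
  next
    case False
    then show ?thesis by (simp add: F_def V_def)
  qed
  have hcont: "continuous_on {0..L} h"
    using hd by (meson DERIV_continuous continuous_on_eq_continuous_within)
  have hvi: "set_integrable lborel {0..L} (\<lambda>t. h t * v t)"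
  proof -
    obtain C where C0: "C \<ge> 0" and C: "\<And>x. x \<in> {0..L} \<Longrightarrow> \<bar>h x\<bar> \<le> C"
      using cont_bounded_Icc[OF hcont] by metis
    have hm: "(\<lambda>x. indicator {0..L} x *\<^sub>R h x) \<in> borel_measurable lborel"
      using borel_measurable_continuous_on_indicator[OF _ hcont] by simp
    show ?thesis unfolding set_integrable_def
    proof (rule Bochner_Integration.integrable_bound[where f="\<lambda>t. C * V t"])
      show "integrable lborel (\<lambda>t. C * V t)" using Vi by simp
      show "(\<lambda>x. indicator {0..L} x *\<^sub>R (h x * v x)) \<in> borel_measurable lborel"
      proof -
        have "(\<lambda>x. (indicator {0..L} x *\<^sub>R h x) * V x) \<in> borel_measurable lborel" using hm by measurable
        moreover have "(\<lambda>x. (indicator {0..L} x *\<^sub>R h x) * V x) = (\<lambda>x. indicator {0..L} x *\<^sub>R (h x * v x))"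
          by (auto simp: V_def indicator_def)
        ultimately show ?thesis by simp
      qed
      show "AE x in lborel. norm (indicator {0..L} x *\<^sub>R (h x * v x)) \<le> norm (C * V x)"
        using C C0 by (intro AE_I2) (auto simp: V_def indicator_def abs_mult intro: mult_right_mono)
    qed
  qed
  have "(LINT x|lborel. LINT t|lborel. F x t) = (LINT t|lborel. LINT x|lborel. F x t)"
    using lborel_pair.Fubini_integral[OF Fint] by simp
  also have "\<dots> = (LINT t|lborel. h L * V t - indicator {0..L} t *\<^sub>R (h t * v t))"
    by (rule Bochner_Integration.integral_cong) (auto simp: inner V_def algebra_simps)
  also have "\<dots> = h L * (LINT t|lborel. V t) - (LINT t:{0..L}|lborel. h t * v t)"
    using Vi hvi unfolding set_integrable_def set_lebesgue_integral_def by simp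
  also have "(LINT t|lborel. V t) = (LINT t:{0..L}|lborel. v t)"
    by (simp add: V_def set_lebesgue_integral_def)
  finally show ?thesis using lhs by simp
qed



lemma L2_si:
  assumes "L2 L f" shows "set_integrable lborel {0..L} f"
proof -
  have m: "(\<lambda>x. indicator {0..L} x *\<^sub>R f x) \<in> borel_measurable lborel"
    using assms by (simp add: L2_def set_borel_measurable_def)
  have i2: "integrable lborel (\<lambda>x. indicator {0..L} x *\<^sub>R (1/2 + (f x)\<^sup>2 / 2))"
    using set_integral_add(1)[OF si_const[of 0 L "1/2"] set_integrable_mult_right[of "1/2" lborel "{0..L}" "\<lambda>x. (f x)\<^sup>2"]]
      assms unfolding set_integrable_def by (simp add: L2_def set_integrable_def add_divide_distrib)
  show ?thesis unfolding set_integrable_def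
  proof (rule Bochner_Integration.integrable_bound[OF i2 m])
    have "\<bar>f x\<bar> \<le> 1/2 + (f x)\<^sup>2 / 2" for x
    proof -
      have "0 \<le> (\<bar>f x\<bar> - 1)\<^sup>2" by simp
      then show ?thesis by (simp add: power2_eq_square algebra_simps)
    qed
    then show "AE x in lborel. norm (indicator {0..L} x *\<^sub>R f x) \<le> norm (indicator {0..L} x *\<^sub>R (1/2 + (f x)\<^sup>2 / 2))"
      by (intro AE_I2) (auto simp: indicator_def)
  qed
qed

lemma si_mult_cont:
  fixes f g :: "real \<Rightarrow> real"
  assumes g: "set_integrable lborel {a..b} g" and f: "continuous_on {a..b} f"
  shows "set_integrable lborel {a..b} (\<lambda>x. f x * g x)"
proof -
  obtain C where C0: "C \<ge> 0" and C: "\<And>x. x \<in> {a..b} \<Longrightarrow> \<bar>f x\<bar> \<le> C"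
    using cont_bounded_Icc[OF f] by metis
  have fm: "(\<lambda>x. indicator {a..b} x *\<^sub>R f x) \<in> borel_measurable lborel"
    using borel_measurable_continuous_on_indicator[OF _ f] by simp
  have gi: "integrable lborel (\<lambda>x. indicator {a..b} x *\<^sub>R g x)" using g by (simp add: set_integrable_def)
  then have gm: "(\<lambda>x. indicator {a..b} x *\<^sub>R g x) \<in> borel_measurable lborel" by auto
  show ?thesis unfolding set_integrable_def
  proof (rule Bochner_Integration.integrable_bound[where f="\<lambda>x. C * (indicator {a..b} x *\<^sub>R g x)"])
    show "integrable lborel (\<lambda>x. C * (indicator {a..b} x *\<^sub>R g x))" using gi by simp
    have "(\<lambda>x. (indicator {a..b} x *\<^sub>R f x) * (indicator {a..b} x *\<^sub>R g x)) \<in> borel_measurable lborel"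
      using fm gm by measurable
    moreover have "(\<lambda>x. (indicator {a..b} x *\<^sub>R f x) * (indicator {a..b} x *\<^sub>R g x)) = (\<lambda>x. indicator {a..b} x *\<^sub>R (f x * g x))"
      by (auto simp: indicator_def)
    ultimately show "(\<lambda>x. indicator {a..b} x *\<^sub>R (f x * g x)) \<in> borel_measurable lborel" by simp
    show "AE x in lborel. norm (indicator {a..b} x *\<^sub>R (f x * g x)) \<le> norm (C * (indicator {a..b} x *\<^sub>R g x))"
      using C C0 by (intro AE_I2) (auto simp: indicator_def abs_mult intro: mult_right_mono)
  qed
qed

lemma prim_eq_integral:
  fixes v :: "real \<Rightarrow> real"
  assumes v: "set_integrable lborel {0..L} v" and x: "x \<in> {0..L}"
  shows "(LINT t:{0..x}|lborel. v t) = integral {0..x} v"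
proof -
  have "set_integrable lborel {0..x} v"
    by (rule set_integrable_subset[OF v]) (use x in auto)
  then show ?thesis by (rule set_borel_integral_eq_integral)
qed

lemma prim_cont:
  fixes v :: "real \<Rightarrow> real"
  assumes v: "set_integrable lborel {0..L} v"
  shows "continuous_on {0..L} (\<lambda>x. LINT t:{0..x}|lborel. v t)"
proof -
  have "v integrable_on {0..L}" using set_borel_integral_eq_integral(1)[OF v] .
  then have "continuous_on {0..L} (\<lambda>x. integral {0..x} v)" by (rule indefinite_integral_continuous_1)
  then show ?thesis
    by (rule continuous_on_eq) (use prim_eq_integral[OF v] in auto)
qed

lemma prim_0:
  fixes v :: "real \<Rightarrow> real"
  shows "(LINT t:{0..0}|lborel. v t) = 0"
proof -
  have "(LINT t:{0..0}|lborel. v t) = (LINT t|lborel. indicator {0} t *\<^sub>R v t)"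
    by (simp add: set_lebesgue_integral_def)
  also have "(\<lambda>t. indicator {0} t *\<^sub>R v t) = (\<lambda>t. v 0 * indicator {0::real} t)"
    by (auto simp: indicator_def)
  finally show ?thesis by simp
qed

lemma weak_deriv_rep:
  assumes L: "L > 0" and u: "L2 L u" and v: "L2 L v" and wd: "weak_deriv L u v"
  shows "\<exists>c. AE x in lborel. x \<in> {0..L} \<longrightarrow> u x = c + (LINT t:{0..x}|lborel. v t)"
proof -
  define V where "V x = (LINT t:{0..x}|lborel. v t)" for x
  have vi: "set_integrable lborel {0..L} v" using L2_si[OF v] .
  have ui: "set_integrable lborel {0..L} u" using L2_si[OF u] .
  have Vc: "continuous_on {0..L} V" unfolding V_def[abs_def] by (rule prim_cont[OF vi])
  have Vi: "set_integrable lborel {0..L} V" by (rule borel_integrable_atLeastAtMost'[OF Vc])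
  have gi: "set_integrable lborel {0..L} (\<lambda>x. u x - V x)" using ui Vi by blast
  have "\<exists>c. AE x in lborel. x \<in> {0..L} \<longrightarrow> u x - V x = c"
  proof (rule FL1[OF L gi])
    fix \<phi> assume t: "test_fun L \<phi>"
    have dc: "continuous_on {0..L} (deriv \<phi>)" using test_fun_cont(2)[OF t] continuous_on_subset by blast
    have ibp: "(LINT x:{0..L}|lborel. deriv \<phi> x * V x) = \<phi> L * (LINT t:{0..L}|lborel. v t) - (LINT t:{0..L}|lborel. \<phi> t * v t)"
      unfolding V_def
      by (rule ibp_ac[OF _ vi]) (use L test_fun_deriv[OF t] dc in \<open>auto intro: has_field_derivative_at_within\<close>)
    have e1: "(LINT x:{0..L}|lborel. u x * deriv \<phi> x) = - (LINT x:{0..L}|lborel. v x * \<phi> x)"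
      using wd t by (simp add: weak_deriv_def)
    have "(LINT x:{0..L}|lborel. (u x - V x) * deriv \<phi> x) = (LINT x:{0..L}|lborel. u x * deriv \<phi> x - deriv \<phi> x * V x)"
      by (simp add: algebra_simps)
    also have "\<dots> = (LINT x:{0..L}|lborel. u x * deriv \<phi> x) - (LINT x:{0..L}|lborel. deriv \<phi> x * V x)"
      using test_si_mult_deriv[OF t ui] si_mult_cont[OF Vi dc] by simp
    also have "\<dots> = 0" using e1 ibp test_fun_ends[OF t L] by (simp add: mult.commute)
    finally show "(LINT x:{0..L}|lborel. (u x - V x) * deriv \<phi> x) = 0" .
  qed
  then obtain c where "AE x in lborel. x \<in> {0..L} \<longrightarrow> u x - V x = c" by blast
  then have "AE x in lborel. x \<in> {0..L} \<longrightarrow> u x = c + V x" by eventually_elim auto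
  then show ?thesis unfolding V_def by blast
qed

lemma ae_eq_cont:
  fixes f g :: "real \<Rightarrow> real"
  assumes L: "L > 0" and f: "continuous_on {0..L} f" and g: "continuous_on {0..L} g"
    and ae: "AE x in lborel. x \<in> {0..L} \<longrightarrow> f x = g x"
  shows "\<forall>x\<in>{0..L}. f x = g x"
proof (rule ccontr)
  assume "\<not> ?thesis"
  then obtain x0 where x0: "x0 \<in> {0..L}" "f x0 \<noteq> g x0" by blast
  have hc: "continuous_on {0..L} (\<lambda>x. f x - g x)" using f g by (intro continuous_intros)
  have "\<exists>d>0. \<forall>y\<in>{0..L}. dist y x0 < d \<longrightarrow> dist (f y - g y) (f x0 - g x0) < \<bar>f x0 - g x0\<bar>"
  proof -
    have "\<bar>f x0 - g x0\<bar> > 0" using x0 by simp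
    then show ?thesis using hc x0 unfolding continuous_on_iff by blast
  qed
  then obtain d where d: "d > 0" and dd: "\<And>y. y \<in> {0..L} \<Longrightarrow> dist y x0 < d \<Longrightarrow> dist (f y - g y) (f x0 - g x0) < \<bar>f x0 - g x0\<bar>"
    by blast
  define a where "a = max 0 (x0 - d)"
  define b where "b = min L (x0 + d)"
  have ab: "a < b" using x0 d L by (auto simp: a_def b_def)
  have ne: "f y \<noteq> g y" if "y \<in> {a<..<b}" for y
  proof -
    have "y \<in> {0..L}" "dist y x0 < d" using that by (auto simp: a_def b_def dist_real_def)
    from dd[OF this] show ?thesis by (auto simp: dist_real_def)
  qed
  have "AE y in lborel. y \<notin> {a<..<b}"
    using ae by eventually_elim (use ne a_def b_def in auto)
  then have "emeasure lborel {a<..<b} = 0"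
    by (subst (asm) AE_iff_measurable[of "{a<..<b}"]) auto
  then show False using ab by simp
qed



lemma ae_prim_eq:
  fixes f g :: "real \<Rightarrow> real"
  assumes f: "set_borel_measurable lborel {0..L} f" and g: "set_borel_measurable lborel {0..L} g"
    and ae: "AE x in lborel. x \<in> {0..L} \<longrightarrow> f x = g x" and x: "x \<in> {0..L}"
  shows "(LINT t:{0..x}|lborel. f t) = (LINT t:{0..x}|lborel. g t)"
  unfolding set_lebesgue_integral_def
proof (rule integral_cong_AE)
  have e: "indicator {0..x} t *\<^sub>R h t = indicator {0..x} t * (indicator {0..L} t *\<^sub>R h t)" for h :: "real \<Rightarrow> real" and t
    using x by (auto simp: indicator_def)
  have fm: "(\<lambda>t. indicator {0..L} t *\<^sub>R f t) \<in> borel_measurable lborel" using f by (simp add: set_borel_measurable_def)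
  have gm: "(\<lambda>t. indicator {0..L} t *\<^sub>R g t) \<in> borel_measurable lborel" using g by (simp add: set_borel_measurable_def)
  show "(\<lambda>t. indicator {0..x} t *\<^sub>R f t) \<in> borel_measurable lborel"
    unfolding e using fm by measurable
  show "(\<lambda>t. indicator {0..x} t *\<^sub>R g t) \<in> borel_measurable lborel"
    unfolding e using gm by measurable
  show "AE t in lborel. indicator {0..x} t *\<^sub>R f t = indicator {0..x} t *\<^sub>R g t"
    using ae by eventually_elim (use x in \<open>auto simp: indicator_def\<close>)
qed

lemma prim_deriv:
  fixes v :: "real \<Rightarrow> real"
  assumes vc: "continuous_on {0..L} v" and x: "x \<in> {0..L}"
  shows "((\<lambda>x. LINT t:{0..x}|lborel. v t) has_real_derivative v x) (at x within {0..L})"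
proof -
  have vi: "set_integrable lborel {0..L} v" by (rule borel_integrable_atLeastAtMost'[OF vc])
  have "((\<lambda>x. integral {0..x} v) has_real_derivative v x) (at x within {0..L})"
    by (rule integral_has_real_derivative[OF vc x])
  then show ?thesis
    by (rule has_field_derivative_transform_within[where d=1]) (use x prim_eq_integral[OF vi] in auto)
qed

lemma H3L_structure:
  assumes L: "L > 0" and H: "in_H3L L w w1 w2 w3"
  shows "\<exists>W2 c2. (\<forall>x\<in>{0..L}. w x = (LINT t:{0..x}|lborel. w1 t)) \<and>
     (\<forall>x\<in>{0..L}. (w has_real_derivative w1 x) (at x within {0..L})) \<and>
     continuous_on {0..L} W2 \<and>
     (\<forall>x\<in>{0..L}. (w1 has_real_derivative W2 x) (at x within {0..L})) \<and>
     (\<forall>x\<in>{0..L}. W2 x = c2 + (LINT t:{0..x}|lborel. w3 t))"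
proof -
  have l0: "L2 L w" and l1: "L2 L w1" and l2: "L2 L w2" and l3: "L2 L w3"
    and d1: "weak_deriv L w w1" and d2: "weak_deriv L w1 w2" and d3: "weak_deriv L w2 w3"
    and c0: "continuous_on {0..L} w" and c1: "continuous_on {0..L} w1"
    and b: "w 0 = 0" "w L = 0" "w1 L = 0"
    using H by (auto simp: in_H3L_def)
  have i1: "set_integrable lborel {0..L} w1" and i2: "set_integrable lborel {0..L} w2"
    and i3: "set_integrable lborel {0..L} w3" using L2_si l1 l2 l3 by auto
  obtain a0 where a0: "AE x in lborel. x \<in> {0..L} \<longrightarrow> w x = a0 + (LINT t:{0..x}|lborel. w1 t)"
    using weak_deriv_rep[OF L l0 l1 d1] by blast
  have wa: "\<forall>x\<in>{0..L}. w x = a0 + (LINT t:{0..x}|lborel. w1 t)"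
    by (rule ae_eq_cont[OF L c0 _ a0]) (intro continuous_intros prim_cont[OF i1])
  moreover have "a0 = 0" using wa[rule_format, of 0] b L prim_0[of w1] by simp
  ultimately have wrep: "\<forall>x\<in>{0..L}. w x = (LINT t:{0..x}|lborel. w1 t)" by simp
  have wder: "\<forall>x\<in>{0..L}. (w has_real_derivative w1 x) (at x within {0..L})"
  proof
    fix x assume x: "x \<in> {0..L}"
    show "(w has_real_derivative w1 x) (at x within {0..L})"
      by (rule has_field_derivative_transform_within[OF prim_deriv[OF c1 x], where d=1]) (use x wrep in auto)
  qed
  obtain c2 where a2: "AE x in lborel. x \<in> {0..L} \<longrightarrow> w2 x = c2 + (LINT t:{0..x}|lborel. w3 t)"
    using weak_deriv_rep[OF L l2 l3 d3] by blast
  define W2 where "W2 x = c2 + (LINT t:{0..x}|lborel. w3 t)" for x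
  have W2c: "continuous_on {0..L} W2" unfolding W2_def by (intro continuous_intros prim_cont[OF i3])
  obtain a1 where a1: "AE x in lborel. x \<in> {0..L} \<longrightarrow> w1 x = a1 + (LINT t:{0..x}|lborel. w2 t)"
    using weak_deriv_rep[OF L l1 l2 d2] by blast
  have pe: "(LINT t:{0..x}|lborel. w2 t) = (LINT t:{0..x}|lborel. W2 t)" if "x \<in> {0..L}" for x
  proof (rule ae_prim_eq[OF _ _ _ that])
    show "set_borel_measurable lborel {0..L} w2" using l2 by (simp add: L2_def)
    show "set_borel_measurable lborel {0..L} W2"
      unfolding set_borel_measurable_def using borel_measurable_continuous_on_indicator[OF _ W2c] by simp
    show "AE x in lborel. x \<in> {0..L} \<longrightarrow> w2 x = W2 x" using a2 by (simp add: W2_def)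
  qed
  have W2i: "set_integrable lborel {0..L} W2" by (rule borel_integrable_atLeastAtMost'[OF W2c])
  have "AE x in lborel. x \<in> {0..L} \<longrightarrow> w1 x = a1 + (LINT t:{0..x}|lborel. W2 t)"
    using a1 by eventually_elim (use pe in auto)
  then have w1rep: "\<forall>x\<in>{0..L}. w1 x = a1 + (LINT t:{0..x}|lborel. W2 t)"
    by (intro ae_eq_cont[OF L c1]) (intro continuous_intros prim_cont[OF W2i])
  have w1der: "\<forall>x\<in>{0..L}. (w1 has_real_derivative W2 x) (at x within {0..L})"
  proof
    fix x assume x: "x \<in> {0..L}"
    have "((\<lambda>x. a1 + (LINT t:{0..x}|lborel. W2 t)) has_real_derivative W2 x) (at x within {0..L})"
      using prim_deriv[OF W2c x] by (auto intro!: derivative_eq_intros)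
    then show "(w1 has_real_derivative W2 x) (at x within {0..L})"
      by (rule has_field_derivative_transform_within[where d=1]) (use x w1rep in auto)
  qed
  show ?thesis using wrep wder W2c w1der by (auto simp: W2_def)
qed



lemma ftc_Icc:
  fixes F f :: "real \<Rightarrow> real"
  assumes L: "0 \<le> L" and fc: "continuous_on {0..L} f"
    and d: "\<And>x. x \<in> {0..L} \<Longrightarrow> (F has_real_derivative f x) (at x within {0..L})"
  shows "(LINT x:{0..L}|lborel. f x) = F L - F 0"
  unfolding set_lebesgue_integral_def
proof (rule integral_FTC_atLeastAtMost[OF L _ fc])
  fix x assume "0 \<le> x" "x \<le> L"
  then show "(F has_vector_derivative f x) (at x within {0..L})"
    using d by (simp add: has_real_derivative_iff_has_vector_derivative)
qed

lemma kato:
  assumes L: "L > 0" and H: "in_H3L L w w1 w2 w3"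
  shows "(LINT x:{0..L}|lborel. x * w x * (w1 x + w3 x))
     = 3/2 * (LINT x:{0..L}|lborel. (w1 x)\<^sup>2) - 1/2 * (LINT x:{0..L}|lborel. (w x)\<^sup>2)"
proof -
  obtain W2 c2 where wrep: "\<forall>x\<in>{0..L}. w x = (LINT t:{0..x}|lborel. w1 t)"
    and wd: "\<forall>x\<in>{0..L}. (w has_real_derivative w1 x) (at x within {0..L})"
    and W2c: "continuous_on {0..L} W2"
    and w1d: "\<forall>x\<in>{0..L}. (w1 has_real_derivative W2 x) (at x within {0..L})"
    and W2rep: "\<forall>x\<in>{0..L}. W2 x = c2 + (LINT t:{0..x}|lborel. w3 t)"
    using H3L_structure[OF L H] by blast
  have c0: "continuous_on {0..L} w" and c1: "continuous_on {0..L} w1"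
    and b: "w 0 = 0" "w L = 0" "w1 L = 0" and l3: "L2 L w3"
    using H by (auto simp: in_H3L_def)
  have i3: "set_integrable lborel {0..L} w3" using L2_si[OF l3] .
  have ci: "set_integrable lborel {0..L} f" if "continuous_on {0..L} f" for f :: "real \<Rightarrow> real"
    by (rule borel_integrable_atLeastAtMost'[OF that])
  have cx: "continuous_on {0..L} (\<lambda>x::real. x)" by (intro continuous_intros)
  note cc = c0 c1 W2c cx
  have L0: "0 \<le> L" using L by simp
  have K1: "(LINT x:{0..L}|lborel. (w x)\<^sup>2 / 2 + x * w x * w1 x) = 0"
  proof -
    have "(LINT x:{0..L}|lborel. (w x)\<^sup>2 / 2 + x * w x * w1 x) = L * (w L)\<^sup>2 / 2 - 0 * (w 0)\<^sup>2 / 2"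
      by (rule ftc_Icc[OF L0, where F="\<lambda>x. x * (w x)\<^sup>2 / 2"])
         (use cc wd in \<open>auto intro!: continuous_intros derivative_eq_intros simp: power2_eq_square algebra_simps\<close>)
    then show ?thesis using b by simp
  qed
  have K0: "(LINT x:{0..L}|lborel. w x + x * w1 x) = 0"
  proof -
    have "(LINT x:{0..L}|lborel. w x + x * w1 x) = L * w L - 0 * w 0"
      by (rule ftc_Icc[OF L0, where F="\<lambda>x. x * w x"])
         (use cc wd in \<open>auto intro!: continuous_intros derivative_eq_intros simp: algebra_simps\<close>)
    then show ?thesis using b by simp
  qed
  have K3: "(LINT x:{0..L}|lborel. (w1 x)\<^sup>2 + w x * W2 x) = 0"
  proof -
    have "(LINT x:{0..L}|lborel. (w1 x)\<^sup>2 + w x * W2 x) = w L * w1 L - w 0 * w1 0"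
      by (rule ftc_Icc[OF L0, where F="\<lambda>x. w x * w1 x"])
         (use cc wd w1d in \<open>auto intro!: continuous_intros derivative_eq_intros simp: power2_eq_square algebra_simps\<close>)
    then show ?thesis using b by simp
  qed
  have K4: "(LINT x:{0..L}|lborel. (w1 x)\<^sup>2 / 2 + x * w1 x * W2 x) = 0"
  proof -
    have "(LINT x:{0..L}|lborel. (w1 x)\<^sup>2 / 2 + x * w1 x * W2 x) = L * (w1 L)\<^sup>2 / 2 - 0 * (w1 0)\<^sup>2 / 2"
      by (rule ftc_Icc[OF L0, where F="\<lambda>x. x * (w1 x)\<^sup>2 / 2"])
         (use cc w1d in \<open>auto intro!: continuous_intros derivative_eq_intros simp: power2_eq_square algebra_simps\<close>)
    then show ?thesis using b by simp
  qed
  have K2: "(LINT x:{0..L}|lborel. (w x + x * w1 x) * (LINT t:{0..x}|lborel. w3 t))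
      = (L * w L) * (LINT t:{0..L}|lborel. w3 t) - (LINT t:{0..L}|lborel. (t * w t) * w3 t)"
    by (rule ibp_ac[OF L0 i3]) (use cc wd in \<open>auto intro!: continuous_intros derivative_eq_intros simp: algebra_simps\<close>)
  have K2': "(LINT x:{0..L}|lborel. (w x + x * w1 x) * (LINT t:{0..x}|lborel. w3 t))
      = (LINT x:{0..L}|lborel. (w x + x * w1 x) * W2 x - c2 * (w x + x * w1 x))"
    by (rule set_lebesgue_integral_cong) (use W2rep in \<open>auto simp: algebra_simps\<close>)
  have I1: "(LINT x:{0..L}|lborel. (w x + x * w1 x) * W2 x - c2 * (w x + x * w1 x))
     = (LINT x:{0..L}|lborel. w x * W2 x) + (LINT x:{0..L}|lborel. x * w1 x * W2 x) - c2 * (LINT x:{0..L}|lborel. w x + x * w1 x)"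
  proof -
    have "(LINT x:{0..L}|lborel. (w x + x * w1 x) * W2 x - c2 * (w x + x * w1 x))
       = (LINT x:{0..L}|lborel. (w x * W2 x + x * w1 x * W2 x) - c2 * (w x + x * w1 x))"
      by (simp add: algebra_simps)
    also have "\<dots> = (LINT x:{0..L}|lborel. w x * W2 x + x * w1 x * W2 x) - c2 * (LINT x:{0..L}|lborel. w x + x * w1 x)"
      by (subst set_integral_diff(2)) (auto intro!: ci continuous_intros simp: cc)
    also have "(LINT x:{0..L}|lborel. w x * W2 x + x * w1 x * W2 x) = (LINT x:{0..L}|lborel. w x * W2 x) + (LINT x:{0..L}|lborel. x * w1 x * W2 x)"
      by (subst set_integral_add(2)) (auto intro!: ci continuous_intros simp: cc)
    finally show ?thesis .
  qed
  have split: "(LINT x:{0..L}|lborel. f x + g x) = (LINT x:{0..L}|lborel. f x) + (LINT x:{0..L}|lborel. g x)"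
    if "set_integrable lborel {0..L} f" "set_integrable lborel {0..L} g" for f g :: "real \<Rightarrow> real"
    using that by simp
  have K1s: "(LINT x:{0..L}|lborel. (w x)\<^sup>2) / 2 + (LINT x:{0..L}|lborel. x * w x * w1 x) = 0"
    using K1 split[of "\<lambda>x. (w x)\<^sup>2 / 2" "\<lambda>x. x * w x * w1 x"] by (simp add: ci continuous_intros cc)
  have K3s: "(LINT x:{0..L}|lborel. (w1 x)\<^sup>2) + (LINT x:{0..L}|lborel. w x * W2 x) = 0"
    using K3 split[of "\<lambda>x. (w1 x)\<^sup>2" "\<lambda>x. w x * W2 x"] by (simp add: ci continuous_intros cc)
  have K4s: "(LINT x:{0..L}|lborel. (w1 x)\<^sup>2) / 2 + (LINT x:{0..L}|lborel. x * w1 x * W2 x) = 0"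
    using K4 split[of "\<lambda>x. (w1 x)\<^sup>2 / 2" "\<lambda>x. x * w1 x * W2 x"] by (simp add: ci continuous_intros cc)
  have B3: "(LINT t:{0..L}|lborel. (t * w t) * w3 t) = 3/2 * (LINT x:{0..L}|lborel. (w1 x)\<^sup>2)"
    using K2 K2' I1 K0 K3s K4s b by simp
  have "(LINT x:{0..L}|lborel. x * w x * (w1 x + w3 x)) = (LINT x:{0..L}|lborel. x * w x * w1 x) + (LINT x:{0..L}|lborel. (x * w x) * w3 x)"
  proof -
    have "(LINT x:{0..L}|lborel. x * w x * (w1 x + w3 x)) = (LINT x:{0..L}|lborel. x * w x * w1 x + (x * w x) * w3 x)"
      by (simp add: algebra_simps)
    also have "\<dots> = (LINT x:{0..L}|lborel. x * w x * w1 x) + (LINT x:{0..L}|lborel. (x * w x) * w3 x)"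
      by (rule split) (auto intro!: ci continuous_intros si_mult_cont[OF i3] simp: cc)
    finally show ?thesis .
  qed
  then show ?thesis using B3 K1s by simp
qed



lemma sbm_iff:
  fixes f :: "real \<Rightarrow> real"
  shows "set_borel_measurable lborel {0..L} f \<longleftrightarrow> f \<in> borel_measurable (restrict_space lborel {0..L})"
  unfolding set_borel_measurable_def by (subst borel_measurable_restrict_space_iff) auto

lemma sat_borel[measurable]: "sat u0 \<in> borel_measurable borel"
  unfolding sat_def[abs_def] by measurable

lemma sat_abs: "u0 \<ge> 0 \<Longrightarrow> \<bar>sat u0 s\<bar> \<le> u0"
  by (auto simp: sat_def)

lemma L2_norm_sq_nonneg: "0 \<le> L2_norm_sq L f"
  unfolding L2_norm_sq_def set_lebesgue_integral_def
  by (rule Bochner_Integration.integral_nonneg) (simp add: indicator_def)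

lemma amgm_abs: "\<bar>p * q\<bar> \<le> (p\<^sup>2 + q\<^sup>2) / (2::real)"
proof -
  have "0 \<le> (\<bar>p\<bar> - \<bar>q\<bar>)\<^sup>2" by simp
  then show ?thesis by (simp add: power2_eq_square abs_mult algebra_simps)
qed

lemma w1_bound:
  assumes L: "L > 0" and u0: "u0 > 0" and H: "in_H3L L w w1 w2 w3"
    and C: "L2_norm_sq L w + L2_norm_sq L (A_op a u0 w w1 w3) \<le> C"
  shows "L2_norm_sq L w1 \<le> 2/3 * (L * (3 * C + 2 * a\<^sup>2 * u0\<^sup>2 * L) / 2 + C / 2)"
proof -
  have l0: "L2 L w" and l1: "L2 L w1" and l3: "L2 L w3" using H by (auto simp: in_H3L_def)
  have m0[measurable]: "w \<in> borel_measurable (restrict_space lborel {0..L})"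
   and m1[measurable]: "w1 \<in> borel_measurable (restrict_space lborel {0..L})"
   and m3[measurable]: "w3 \<in> borel_measurable (restrict_space lborel {0..L})"
    using l0 l1 l3 by (auto simp: L2_def sbm_iff)
  have mx[measurable]: "(\<lambda>x::real. x) \<in> borel_measurable (restrict_space lborel {0..L})"
    by (rule measurable_restrict_space1) simp
  have s0: "set_integrable lborel {0..L} (\<lambda>x. (w x)\<^sup>2)"
   and s1: "set_integrable lborel {0..L} (\<lambda>x. (w1 x)\<^sup>2)"
   and s3: "set_integrable lborel {0..L} (\<lambda>x. (w3 x)\<^sup>2)"
    using l0 l1 l3 by (auto simp: L2_def)
  define f where "f x = w1 x + w3 x" for x
  define A where "A = A_op a u0 w w1 w3"
  have Af: "f x = - A x - a * sat u0 (w x)" for x by (simp add: f_def A_def A_op_def)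
  have fsq: "set_integrable lborel {0..L} (\<lambda>x. (f x)\<^sup>2)"
  proof (rule set_integrable_bound[where f="\<lambda>x. 2 * (w1 x)\<^sup>2 + 2 * (w3 x)\<^sup>2"])
    show "set_integrable lborel {0..L} (\<lambda>x. 2 * (w1 x)\<^sup>2 + 2 * (w3 x)\<^sup>2)" using s1 s3 by auto
    show "set_borel_measurable lborel {0..L} (\<lambda>x. (f x)\<^sup>2)" unfolding sbm_iff f_def by measurable
    have "(w1 x + w3 x)\<^sup>2 \<le> 2 * (w1 x)\<^sup>2 + 2 * (w3 x)\<^sup>2" for x
      using sum_squares_bound[of "w1 x" "w3 x"] by (simp add: power2_eq_square algebra_simps)
    then show "AE x in lborel. x \<in> {0..L} \<longrightarrow> norm ((f x)\<^sup>2) \<le> norm (2 * (w1 x)\<^sup>2 + 2 * (w3 x)\<^sup>2)"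
      by (intro AE_I2) (simp add: f_def)
  qed
  have Asq: "set_integrable lborel {0..L} (\<lambda>x. (A x)\<^sup>2)"
  proof (rule set_integrable_bound[where f="\<lambda>x. 2 * (f x)\<^sup>2 + 2 * (a * u0)\<^sup>2"])
    show "set_integrable lborel {0..L} (\<lambda>x. 2 * (f x)\<^sup>2 + 2 * (a * u0)\<^sup>2)" using fsq si_const by auto
    show "set_borel_measurable lborel {0..L} (\<lambda>x. (A x)\<^sup>2)" unfolding sbm_iff A_def A_op_def by measurable
    have "(A x)\<^sup>2 \<le> 2 * (f x)\<^sup>2 + 2 * (a * u0)\<^sup>2" for x
    proof -
      have "A x = - f x - a * sat u0 (w x)" using Af[of x] by simp
      moreover have "(a * sat u0 (w x))\<^sup>2 \<le> (a * u0)\<^sup>2"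
        using sat_abs[of u0 "w x"] u0 by (simp add: power_mult_distrib abs_le_square_iff[symmetric] abs_mult mult_left_mono)
      moreover have "(- f x - a * sat u0 (w x))\<^sup>2 \<le> 2 * (f x)\<^sup>2 + 2 * (a * sat u0 (w x))\<^sup>2"
        using sum_squares_bound[of "f x" "a * sat u0 (w x)"] by (simp add: power2_eq_square algebra_simps)
      ultimately show ?thesis by simp
    qed
    then show "AE x in lborel. x \<in> {0..L} \<longrightarrow> norm ((A x)\<^sup>2) \<le> norm (2 * (f x)\<^sup>2 + 2 * (a * u0)\<^sup>2)"
      by (intro AE_I2) simp
  qed
  have Nw: "L2_norm_sq L w \<le> C" and NA: "L2_norm_sq L A \<le> C"
    using C L2_norm_sq_nonneg[of L w] L2_norm_sq_nonneg[of L A] by (auto simp: A_def)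
  have Nf: "(LINT x:{0..L}|lborel. (f x)\<^sup>2) \<le> 2 * C + 2 * a\<^sup>2 * u0\<^sup>2 * L"
  proof -
    have "(LINT x:{0..L}|lborel. (f x)\<^sup>2) \<le> (LINT x:{0..L}|lborel. 2 * (A x)\<^sup>2 + 2 * (a * u0)\<^sup>2)"
    proof (rule set_integral_mono[OF fsq])
      show "set_integrable lborel {0..L} (\<lambda>x. 2 * (A x)\<^sup>2 + 2 * (a * u0)\<^sup>2)" using Asq si_const by auto
      fix x
      have "(a * sat u0 (w x))\<^sup>2 \<le> (a * u0)\<^sup>2"
        using sat_abs[of u0 "w x"] u0 by (simp add: power_mult_distrib abs_le_square_iff[symmetric] abs_mult mult_left_mono)
      moreover have "(- A x - a * sat u0 (w x))\<^sup>2 \<le> 2 * (A x)\<^sup>2 + 2 * (a * sat u0 (w x))\<^sup>2"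
        using sum_squares_bound[of "A x" "a * sat u0 (w x)"] by (simp add: power2_eq_square algebra_simps)
      ultimately show "(f x)\<^sup>2 \<le> 2 * (A x)\<^sup>2 + 2 * (a * u0)\<^sup>2" using Af[of x] by simp
    qed
    also have "\<dots> = 2 * L2_norm_sq L A + 2 * (a * u0)\<^sup>2 * L"
      using Asq si_const[of 0 L "2 * (a * u0)\<^sup>2"] L
      by (simp add: L2_norm_sq_def set_integral_const)
    also have "\<dots> \<le> 2 * C + 2 * a\<^sup>2 * u0\<^sup>2 * L" using NA by (simp add: power_mult_distrib)
    finally show ?thesis .
  qed
  have kat: "(LINT x:{0..L}|lborel. x * w x * f x) = 3/2 * L2_norm_sq L w1 - 1/2 * L2_norm_sq L w"
    using kato[OF L H] by (simp add: f_def L2_norm_sq_def)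
  have pb: "\<bar>x * w x * f x\<bar> \<le> L / 2 * ((w x)\<^sup>2 + (f x)\<^sup>2)" if "x \<in> {0..L}" for x
  proof -
    have "\<bar>w x * f x\<bar> \<le> ((w x)\<^sup>2 + (f x)\<^sup>2) / 2" by (rule amgm_abs)
    then have "\<bar>x\<bar> * \<bar>w x * f x\<bar> \<le> L * (((w x)\<^sup>2 + (f x)\<^sup>2) / 2)"
      using that by (intro mult_mono) auto
    then show ?thesis by (simp add: abs_mult mult.assoc)
  qed
  have "(LINT x:{0..L}|lborel. x * w x * f x) \<le> (LINT x:{0..L}|lborel. L / 2 * ((w x)\<^sup>2 + (f x)\<^sup>2))"
  proof (rule set_integral_mono)
    show "set_integrable lborel {0..L} (\<lambda>x. L / 2 * ((w x)\<^sup>2 + (f x)\<^sup>2))" using s0 fsq by auto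
    show "\<And>x. x \<in> {0..L} \<Longrightarrow> x * w x * f x \<le> L / 2 * ((w x)\<^sup>2 + (f x)\<^sup>2)"
      using pb abs_le_D1 by blast
    show "set_integrable lborel {0..L} (\<lambda>x. x * w x * f x)"
    proof (rule set_integrable_bound[where f="\<lambda>x. L / 2 * ((w x)\<^sup>2 + (f x)\<^sup>2)"])
      show "set_integrable lborel {0..L} (\<lambda>x. L / 2 * ((w x)\<^sup>2 + (f x)\<^sup>2))" using s0 fsq by auto
      show "set_borel_measurable lborel {0..L} (\<lambda>x. x * w x * f x)" unfolding sbm_iff f_def
        by (intro borel_measurable_times borel_measurable_add mx m0 m1 m3)
      show "AE x in lborel. x \<in> {0..L} \<longrightarrow> norm (x * w x * f x) \<le> norm (L / 2 * ((w x)\<^sup>2 + (f x)\<^sup>2))"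
        using L pb by (intro AE_I2) auto
    qed
  qed
  also have "\<dots> = L / 2 * (L2_norm_sq L w + (LINT x:{0..L}|lborel. (f x)\<^sup>2))"
    using s0 fsq by (simp add: L2_norm_sq_def)
  also have "\<dots> \<le> L / 2 * (C + (2 * C + 2 * a\<^sup>2 * u0\<^sup>2 * L))"
    using Nw Nf L by (intro mult_left_mono add_mono) auto
  finally have "3/2 * L2_norm_sq L w1 - 1/2 * L2_norm_sq L w \<le> L / 2 * (C + (2 * C + 2 * a\<^sup>2 * u0\<^sup>2 * L))"
    using kat by simp
  then show ?thesis using Nw by (simp add: field_simps)
qed



lemma abs_le_amgm_t:
  fixes a t :: real assumes t: "t > 0"
  shows "\<bar>a\<bar> \<le> (t * a\<^sup>2 + 1 / t) / 2"
proof -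
  have "0 \<le> (t * \<bar>a\<bar> - 1)\<^sup>2" by simp
  then have "0 \<le> t * t * a\<^sup>2 - 2 * t * \<bar>a\<bar> + 1" by (simp add: power2_eq_square algebra_simps)
  then have "2 * t * \<bar>a\<bar> \<le> t * t * a\<^sup>2 + 1" by linarith
  then show ?thesis using t by (simp add: field_simps power2_eq_square)
qed

lemma w_diff_bound:
  assumes L: "L > 0" and H: "in_H3L L w w1 w2 w3" and N: "L2_norm_sq L w1 \<le> K"
    and x: "x \<in> {0..L}" and y: "y \<in> {0..L}" and yx: "y \<le> x" and t: "t > 0"
  shows "\<bar>w x - w y\<bar> \<le> (t * K + (x - y) / t) / 2"
proof -
  obtain W2 c2 where wrep: "\<forall>x\<in>{0..L}. w x = (LINT t:{0..x}|lborel. w1 t)"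
    using H3L_structure[OF L H] by blast
  have c1: "continuous_on {0..L} w1" and l1: "L2 L w1" using H by (auto simp: in_H3L_def)
  have i1: "set_integrable lborel {0..L} w1" using L2_si[OF l1] .
  have intg: "f integrable_on {a..b}" if "continuous_on {0..L} f" "{a..b} \<subseteq> {0..L}" for f :: "real \<Rightarrow> real" and a b
    by (rule integrable_continuous_real) (use that continuous_on_subset in blast)
  have c1s: "continuous_on {0..L} (\<lambda>s. (w1 s)\<^sup>2)" using c1 by (intro continuous_intros)
  have "w x = integral {0..x} w1" "w y = integral {0..y} w1"
    using wrep prim_eq_integral[OF i1] x y by auto
  moreover have "integral {0..y} w1 + integral {y..x} w1 = integral {0..x} w1"
    by (rule Henstock_Kurzweil_Integration.integral_combine) (use y yx intg[OF c1, of 0 x] x in auto)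
  ultimately have wd: "w x - w y = integral {y..x} w1" by simp
  have sub: "{y..x} \<subseteq> {0..L}" using x y by auto
  have "norm (integral {y..x} w1) \<le> integral {y..x} (\<lambda>s. t / 2 * (w1 s)\<^sup>2 + 1 / (2 * t))"
  proof (rule integral_norm_bound_integral)
    show "w1 integrable_on {y..x}" by (rule intg[OF c1 sub])
    show "(\<lambda>s. t / 2 * (w1 s)\<^sup>2 + 1 / (2 * t)) integrable_on {y..x}"
      by (rule intg[OF _ sub]) (use c1 in \<open>intro continuous_intros\<close>)
    fix s show "norm (w1 s) \<le> t / 2 * (w1 s)\<^sup>2 + 1 / (2 * t)"
      using abs_le_amgm_t[OF t, of "w1 s"] by (simp add: field_simps)
  qed
  also have "\<dots> = t / 2 * integral {y..x} (\<lambda>s. (w1 s)\<^sup>2) + (x - y) / (2 * t)"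
  proof -
    have "integral {y..x} (\<lambda>s. t / 2 * (w1 s)\<^sup>2 + 1 / (2 * t)) = integral {y..x} (\<lambda>s. t / 2 * (w1 s)\<^sup>2) + integral {y..x} (\<lambda>s. 1 / (2 * t))"
      by (rule integral_add; rule intg[OF _ sub]; use c1 in \<open>intro continuous_intros\<close>)
    then show ?thesis using yx by (simp add: content_real)
  qed
  also have "integral {y..x} (\<lambda>s. (w1 s)\<^sup>2) \<le> integral {0..L} (\<lambda>s. (w1 s)\<^sup>2)"
    by (rule integral_subset_le[OF sub intg[OF c1s sub] intg[OF c1s]]) auto
  also have "integral {0..L} (\<lambda>s. (w1 s)\<^sup>2) = L2_norm_sq L w1"
    unfolding L2_norm_sq_def
    by (rule set_borel_integral_eq_integral(2)[symmetric]) (rule borel_integrable_atLeastAtMost'[OF c1s])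
  finally have "norm (integral {y..x} w1) \<le> t / 2 * L2_norm_sq L w1 + (x - y) / (2 * t)"
    using t by simp
  also have "\<dots> \<le> t / 2 * K + (x - y) / (2 * t)" using N t by simp
  also have "\<dots> = (t * K + (x - y) / t) / 2" using t by (simp add: field_simps)
  finally show ?thesis using wd by simp
qed



theorem mainTheorem5:
  fixes L a u0 :: real and w w1 w2 w3 :: "nat \<Rightarrow> real \<Rightarrow> real"
  assumes "L > 0" and "a > 0" and "u0 > 0"
    and "\<forall>n. in_H3L L (w n) (w1 n) (w2 n) (w3 n)"
    and "\<exists>C. \<forall>n. L2_norm_sq L (w n) + L2_norm_sq L (A_op a u0 (w n) (w1 n) (w3 n)) \<le> C"
  shows "\<exists>r g. strict_mono r \<and> L2 L g \<and>
           (\<lambda>n. L2_norm_sq L (\<lambda>x. w (r n) x - g x)) \<longlonglongrightarrow> 0"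
proof -
  note L = assms(1) and u0 = assms(3) and H = assms(4)
  obtain C where C: "\<And>n. L2_norm_sq L (w n) + L2_norm_sq L (A_op a u0 (w n) (w1 n) (w3 n)) \<le> C"
    using assms(5) by blast
  define K where "K = 2/3 * (L * (3 * C + 2 * a\<^sup>2 * u0\<^sup>2 * L) / 2 + C / 2)"
  have N1: "L2_norm_sq L (w1 n) \<le> K" for n
    unfolding K_def by (rule w1_bound[OF L u0 H[rule_format] C])
  have K0: "K \<ge> 0" using N1[of 0] L2_norm_sq_nonneg[of L "w1 0"] by linarith
  define S where "S = {0..L}"
  have diff: "\<bar>w n x - w n y\<bar> \<le> (t * K + \<bar>x - y\<bar> / t) / 2"
    if "x \<in> S" "y \<in> S" "t > 0" for n x y t
  proof (cases "y \<le> x")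
    case True
    then show ?thesis using w_diff_bound[OF L H[rule_format] N1 _ _ True that(3)] that by (simp add: S_def)
  next
    case False
    then have "\<bar>w n y - w n x\<bar> \<le> (t * K + (y - x) / t) / 2"
      using w_diff_bound[OF L H[rule_format] N1, of y x t] that False by (simp add: S_def)
    then show ?thesis using False by (simp add: abs_minus_commute)
  qed
  have w0: "w n 0 = 0" for n using H by (simp add: in_H3L_def)
  have Mb: "norm (w n x) \<le> (K + L) / 2" if "x \<in> S" for n x
  proof -
    have "\<bar>w n x - w n 0\<bar> \<le> (1 * K + \<bar>x - 0\<bar> / 1) / 2"
      by (rule diff) (use that L in \<open>auto simp: S_def\<close>)
    then show ?thesis using w0[of n] that by (auto simp: S_def)
  qed
  have eq: "\<exists>d. 0 < d \<and> (\<forall>n y. y \<in> S \<and> norm (x - y) < d \<longrightarrow> norm (w n x - w n y) < e)"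
    if x: "x \<in> S" and e: "0 < e" for x e
  proof (intro exI conjI allI impI)
    define t where "t = e / (K + 1)"
    have t: "t > 0" using e K0 by (simp add: t_def)
    show "0 < e * t" using e t by simp
    fix n y assume y: "y \<in> S \<and> norm (x - y) < e * t"
    have "\<bar>w n x - w n y\<bar> \<le> (t * K + \<bar>x - y\<bar> / t) / 2" by (rule diff) (use x y t in auto)
    also have "\<dots> < (e + e) / 2"
    proof -
      have "t * K < e" using e K0 by (simp add: t_def field_simps)
      moreover have "\<bar>x - y\<bar> / t < e" using y t by (simp add: field_simps)
      ultimately show ?thesis by simp
    qed
    finally show "norm (w n x - w n y) < e" by simp
  qed
  have cS: "compact S" by (simp add: S_def)
  obtain g k where gc: "continuous_on S g" and k: "strict_mono (k :: nat \<Rightarrow> nat)"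
    and unif: "\<And>e. 0 < e \<Longrightarrow> \<exists>N. \<forall>n x. n \<ge> N \<and> x \<in> S \<longrightarrow> norm (w (k n) x - g x) < e"
    by (rule Arzela_Ascoli[OF cS Mb eq]) blast+
  have L2g: "L2 L g"
    unfolding L2_def
  proof
    show "set_borel_measurable lborel {0..L} g"
      unfolding set_borel_measurable_def using borel_measurable_continuous_on_indicator[of S g] gc
      by (simp add: S_def)
    show "set_integrable lborel {0..L} (\<lambda>x. (g x)\<^sup>2)"
      by (rule borel_integrable_atLeastAtMost') (use gc in \<open>auto simp: S_def intro!: continuous_intros\<close>)
  qed
  have wc: "continuous_on S (w n)" for n using H by (simp add: in_H3L_def S_def)
  have conv: "(\<lambda>n. L2_norm_sq L (\<lambda>x. w (k n) x - g x)) \<longlonglongrightarrow> 0"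
  proof (rule LIMSEQ_I)
    fix r :: real assume r: "0 < r"
    define e where "e = sqrt (r / (2 * L))"
    have e: "e > 0" using r L by (simp add: e_def)
    have e2: "e\<^sup>2 * L = r / 2" using r L by (simp add: e_def)
    obtain N where N: "\<And>n x. n \<ge> N \<Longrightarrow> x \<in> S \<Longrightarrow> norm (w (k n) x - g x) < e"
      using unif[OF e] by blast
    show "\<exists>no. \<forall>n\<ge>no. norm (L2_norm_sq L (\<lambda>x. w (k n) x - g x) - 0) < r"
    proof (intro exI allI impI)
      fix n assume n: "N \<le> n"
      have "L2_norm_sq L (\<lambda>x. w (k n) x - g x) \<le> (LINT x:{0..L}|lborel. e\<^sup>2)"
        unfolding L2_norm_sq_def
      proof (rule set_integral_mono)
        show "set_integrable lborel {0..L} (\<lambda>x. (w (k n) x - g x)\<^sup>2)"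
          by (rule borel_integrable_atLeastAtMost') (use gc wc in \<open>auto simp: S_def intro!: continuous_intros\<close>)
        show "set_integrable lborel {0..L} (\<lambda>x. e\<^sup>2)" by (rule si_const)
        fix x assume "x \<in> {0..L}"
        then have "\<bar>w (k n) x - g x\<bar> < e" using N[OF n, of x] by (simp add: S_def)
        then show "(w (k n) x - g x)\<^sup>2 \<le> e\<^sup>2"
          by (simp add: abs_le_square_iff[symmetric] less_imp_le)
      qed
      also have "\<dots> = e\<^sup>2 * L" using L by (simp add: set_integral_const)
      finally have "L2_norm_sq L (\<lambda>x. w (k n) x - g x) \<le> r / 2" using e2 by simp
      then show "norm (L2_norm_sq L (\<lambda>x. w (k n) x - g x) - 0) < r"
        using L2_norm_sq_nonneg[of L "\<lambda>x. w (k n) x - g x"] r by simp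
    qed
  qed
  show ?thesis using k L2g conv by blast
qed


end
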